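(* Let $N \ge D \ge 1$ and $K \ge 2$ be integers. For the $(N,D,K)$ HetDAPAC system (defined in the context), the rate $$R=\frac{1}{K+1}$$ is achievable. It is achieved by a scheme whose load ratio is $\frac{1}{KD}$ and which requires common randomness of size $H(\mathcal{S})\geq KL$ ($q$-ary symbols), where $L$ is the message length.
   Context: An $(N,D,K)$ heterogeneous distributed attribute-based private access control (HetDAPAC) system is defined as follows. Each user is identified by an attribute vector $\bm{v}=(v_1,\dots,v_N)$ with $v_n\in\mathcal{V}_n$, $|\mathcal{V}_n|=K$ for each $n\in[N]$ (the ordering of each $\mathcal{V}_n$ is public). There are $K^N$ independent messages $W_{\bm{v}}$, one per attribute vector, each consisting of $L$ i.i.d. uniform symbols of a finite field $\mathbb{F}_q$; $\mathcal{W}$ denotes the set of all messages. There are $D+1$ non-colluding, non-communicating servers, each storing all of $\mathcal{W}$ together with a shared common randomness $\mathcal{S}$ consisting of i.i.d. uniform symbols of $\mathbb{F}_q$, independent of $\mathcal{W}$ and of the user's attribute vector, and unknown to the user. The user has a (random) attribute vector $\bm{v}^*=(v^*_1,\dots,v^*_N)$ and wants its designated message $W_{\bm{v}^*}$. Verification phase: for $n\in[D]$ the user reveals $v^*_n$ to server $n$ (a "dedicated" server); the user reveals $v^*_{D+1},\dots,v^*_N$ to server $D+1$ (the "central" server), which verifies them and announces them to servers $1,\dots,D$. Thus server $n\in[D]$ knows $v^*_n$ and $v^*_{[D+1:N]}$, and server $D+1$ knows only $v^*_{[D+1:N]}$. Access control: server $n\in[D]$ may only use the database $\mathcal{W}^n=\{W_{\bm{v}}: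 v_n=v^*_n,\ v_{[D+1:N]}=v^*_{[D+1:N]}\}$, and server $D+1$ may only use $\mathcal{W}^{D+1}=\{W_{\bm{v}}: v_{[D+1:N]}=v^*_{[D+1:N]}\}$. Retrieval phase: the user sends query $Q_n$ to server $n\in[D+1]$, with $I(Q_1,\dots,Q_{D+1};\mathcal{W})=0$; server $n$ returns an answer $A_n$ that is a deterministic function of $(Q_n,\mathcal{W}^n,\mathcal{S})$. Requirements: (correctness) $H(W_{\bm{v}^*}\mid Q_{[1:D+1]},A_{[1:D+1]})=0$; (attribute privacy) for $n\in[D]$, $I(Q_n; v^*_{[1:D]}\setminus v^*_n \mid \mathcal{S}, v^*_{[D+1:N]}, v^*_n)=0$, and $I(Q_{D+1}; v^*_{[1:D]}\mid \mathcal{S}, v^*_{[D+1:N]})=0$; (database secrecy) $I(\mathcal{W}\setminus\{W_{\bm{v}^*}\}; Q_{[1:D+1]},A_{[1:D+1]})=0$. The rate of a scheme is $L$ divided by the total download cost (total number of $\mathbb{F}_q$ symbols downloaded from all $D+1$ servers); a rate $R$ is achievable if some scheme (for some message length $L$) satisfying all requirements has rate $R$. The load ratio of a scheme (with equal download costs from each dedicated server) is the download cost from any one of servers $1,\dots,D$ divided by the download cost from server $D+1$. *)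

theory Defs
  imports "HOL-Probability.Probability"
begin

definition ent :: "'a pmf \<Rightarrow> real" where
  "ent p = - (\<Sum>x\<in>set_pmf p. pmf p x * log 2 (pmf p x))"

definition Ent :: "'w pmf \<Rightarrow> ('w \<Rightarrow> 'a) \<Rightarrow> real" where
  "Ent M X = ent (map_pmf X M)"

definition CondEnt :: "'w pmf \<Rightarrow> ('w \<Rightarrow> 'a) \<Rightarrow> ('w \<Rightarrow> 'b) \<Rightarrow> real" where
  "CondEnt M X Y = Ent M (\<lambda>w. (X w, Y w)) - Ent M Y"

definition CondMI :: "'w pmf \<Rightarrow> ('w \<Rightarrow> 'a) \<Rightarrow> ('w \<Rightarrow> 'b) \<Rightarrow> ('w \<Rightarrow> 'c) \<Rightarrow> real" where
  "CondMI M X Y Z = Ent M (\<lambda>w. (X w, Z w)) + Ent M (\<lambda>w. (Y w, Z w))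
                    - Ent M (\<lambda>w. (X w, Y w, Z w)) - Ent M Z"

definition MI :: "'w pmf \<Rightarrow> ('w \<Rightarrow> 'a) \<Rightarrow> ('w \<Rightarrow> 'b) \<Rightarrow> real" where
  "MI M X Y = CondMI M X Y (\<lambda>_. ())"

text \<open>Conventions: attributes are indexed 0..N-1 (paper's 1..N), the value set of each
  attribute is {0..<K}.  Servers are indexed 0..D (paper's 1..D+1): server n < D is the
  dedicated server of attribute n, server D is the central server, which knows attributes
  D..N-1 (paper's D+1..N).\<close>

definition attrs :: "nat \<Rightarrow> nat \<Rightarrow> (nat \<Rightarrow> nat) set" where
  "attrs N K = {v. (\<forall>i<N. v i < K) \<and> (\<forall>i\<ge>N. v i = 0)}"

text \<open>Databases: one message of L symbols of F_q per attribute vector (zero padding outside).\<close>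
definition dbs :: "nat \<Rightarrow> nat \<Rightarrow> nat \<Rightarrow> ((nat \<Rightarrow> nat) \<Rightarrow> nat \<Rightarrow> 'f::{finite,field}) set" where
  "dbs N K L = {W. \<forall>v l. (v \<notin> attrs N K \<or> L \<le> l) \<longrightarrow> W v l = 0}"

text \<open>Common randomness: m i.i.d. uniform symbols of F_q.\<close>
definition crs :: "nat \<Rightarrow> (nat \<Rightarrow> 'f::{finite,field}) set" where
  "crs m = {S. \<forall>i\<ge>m. S i = 0}"

text \<open>Database server n is allowed to use, given the user's attribute vector v.\<close>
definition acc :: "nat \<Rightarrow> nat \<Rightarrow> nat \<Rightarrow> (nat \<Rightarrow> nat) \<Rightarrow> nat \<Rightarrow> (nat \<Rightarrow> nat) set" where
  "acc N D K v n =
     (if n < D then {u \<in> attrs N K. u n = v n \<and> (\<forall>i. D \<le> i \<and> i < N \<longrightarrow> u i = v i)}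
      else {u \<in> attrs N K. \<forall>i. D \<le> i \<and> i < N \<longrightarrow> u i = v i})"

text \<open>Attribute values known to server n (after verification phase).\<close>
definition known :: "nat \<Rightarrow> nat \<Rightarrow> (nat \<Rightarrow> nat) \<Rightarrow> nat \<Rightarrow> (nat \<Rightarrow> nat option)" where
  "known N D v n = (\<lambda>i. if (n < D \<and> i = n) \<or> (D \<le> i \<and> i < N) then Some (v i) else None)"

definition rdb :: "((nat \<Rightarrow> nat) \<Rightarrow> nat \<Rightarrow> 'f::zero) \<Rightarrow> (nat \<Rightarrow> nat) set \<Rightarrow> ((nat \<Rightarrow> nat) \<Rightarrow> nat \<Rightarrow> 'f)" where
  "rdb W A = (\<lambda>u. if u \<in> A then W u else (\<lambda>_. 0))"

definition rv :: "(nat \<Rightarrow> nat) \<Rightarrow> nat set \<Rightarrow> (nat \<Rightarrow> nat option)" where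
  "rv v I = (\<lambda>i. if i \<in> I then Some (v i) else None)"

text \<open>A scheme: qd v is the distribution of the query tuple (query Q n to server n, a list
  of field symbols) generated by the user from its attribute vector v and private
  randomness; ans n is the deterministic answer function of server n, taking the query, the
  attribute values known to the server, the accessible part of the database, and the
  common randomness.\<close>
definition outcome ::
  "nat \<Rightarrow> nat \<Rightarrow> nat \<Rightarrow> nat \<Rightarrow> (nat \<Rightarrow> nat) pmf \<Rightarrow> ((nat \<Rightarrow> nat) \<Rightarrow> (nat \<Rightarrow> 'f list) pmf)
   \<Rightarrow> ((nat \<Rightarrow> nat) \<times> (nat \<Rightarrow> 'f list) \<times> ((nat \<Rightarrow> nat) \<Rightarrow> nat \<Rightarrow> 'f) \<times> (nat \<Rightarrow> 'f::{finite,field})) pmf"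
  where
  "outcome N K L m P qd =
     bind_pmf P (\<lambda>v. bind_pmf (qd v) (\<lambda>Q.
       bind_pmf (pmf_of_set (dbs N K L)) (\<lambda>W.
         bind_pmf (pmf_of_set (crs m)) (\<lambda>S. return_pmf (v, Q, W, S)))))"

definition answer ::
  "nat \<Rightarrow> nat \<Rightarrow> nat \<Rightarrow> (nat \<Rightarrow> 'f list \<Rightarrow> (nat \<Rightarrow> nat option) \<Rightarrow> ((nat \<Rightarrow> nat) \<Rightarrow> nat \<Rightarrow> 'f) \<Rightarrow> (nat \<Rightarrow> 'f) \<Rightarrow> 'f list)
   \<Rightarrow> nat \<Rightarrow> ((nat \<Rightarrow> nat) \<times> (nat \<Rightarrow> 'f list) \<times> ((nat \<Rightarrow> nat) \<Rightarrow> nat \<Rightarrow> 'f) \<times> (nat \<Rightarrow> 'f::{finite,field}))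
   \<Rightarrow> 'f list" where
  "answer N D K ans n = (\<lambda>(v, Q, W, S). ans n (Q n) (known N D v n) (rdb W (acc N D K v n)) S)"

text \<open>A valid (N,D,K) HetDAPAC scheme with message length L, common randomness of m symbols,
  and (constant) download cost c n from server n, for attribute distribution P.\<close>
definition hetdapac_scheme ::
  "nat \<Rightarrow> nat \<Rightarrow> nat \<Rightarrow> (nat \<Rightarrow> nat) pmf \<Rightarrow> nat \<Rightarrow> nat
   \<Rightarrow> ((nat \<Rightarrow> nat) \<Rightarrow> (nat \<Rightarrow> 'f list) pmf)
   \<Rightarrow> (nat \<Rightarrow> 'f list \<Rightarrow> (nat \<Rightarrow> nat option) \<Rightarrow> ((nat \<Rightarrow> nat) \<Rightarrow> nat \<Rightarrow> 'f) \<Rightarrow> (nat \<Rightarrow> 'f::{finite,field}) \<Rightarrow> 'f list)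
   \<Rightarrow> (nat \<Rightarrow> nat) \<Rightarrow> bool" where
  "hetdapac_scheme N D K P L m qd ans c \<longleftrightarrow>
     (let M = outcome N K L m P qd;
          vs = (\<lambda>(v, Q, W, S). v);
          Qs = (\<lambda>(v, Q, W, S). Q);
          Ws = (\<lambda>(v, Q, W, S). W);
          Ss = (\<lambda>(v, Q, W, S). S);
          Qall = (\<lambda>w. map (Qs w) [0..<Suc D]);
          Aall = (\<lambda>w. map (\<lambda>n. answer N D K ans n w) [0..<Suc D])
      in (\<forall>v\<in>set_pmf P. finite (set_pmf (qd v)))
       \<and> (\<forall>w\<in>set_pmf M. \<forall>n\<le>D. length (answer N D K ans n w) = c n)
       \<and> MI M Qall Ws = 0
       \<and> CondEnt M (\<lambda>w. Ws w (vs w)) (\<lambda>w. (Qall w, Aall w)) = 0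
       \<and> (\<forall>n<D. CondMI M (\<lambda>w. Qs w n) (\<lambda>w. rv (vs w) ({0..<D} - {n}))
                 (\<lambda>w. (Ss w, rv (vs w) {D..<N}, vs w n)) = 0)
       \<and> CondMI M (\<lambda>w. Qs w D) (\<lambda>w. rv (vs w) {0..<D}) (\<lambda>w. (Ss w, rv (vs w) {D..<N})) = 0
       \<and> CondMI M (\<lambda>w. (Ws w) (vs w := (\<lambda>_. 0))) (\<lambda>w. (Qall w, Aall w)) vs = 0)"

end

theory Submission
  imports Defs
begin


lemma sum_map_pmf_fin:
  fixes f :: "'b \<Rightarrow> real"
  assumes fin: "finite (set_pmf M)"
  shows "(\<Sum>y\<in>set_pmf (map_pmf g M). pmf (map_pmf g M) y * f y) = (\<Sum>w\<in>set_pmf M. pmf M w * f (g w))"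
proof -
  have fin2: "finite (set_pmf (map_pmf g M))" using fin by simp
  have "(\<Sum>y\<in>set_pmf (map_pmf g M). pmf (map_pmf g M) y * f y) = measure_pmf.expectation (map_pmf g M) f"
    by (subst integral_measure_pmf[OF fin2]) (auto simp: mult.commute)
  also have "\<dots> = measure_pmf.expectation M (\<lambda>w. f (g w))" by simp
  also have "\<dots> = (\<Sum>w\<in>set_pmf M. pmf M w * f (g w))"
    by (subst integral_measure_pmf[OF fin]) (auto simp: mult.commute)
  finally show ?thesis .
qed

lemma Ent_sum:
  assumes fin: "finite (set_pmf M)"
  shows "Ent M X = - (\<Sum>w\<in>set_pmf M. pmf M w * log 2 (pmf (map_pmf X M) (X w)))"
  unfolding Ent_def ent_def using sum_map_pmf_fin[OF fin, of X "\<lambda>y. log 2 (pmf (map_pmf X M) y)"]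
  by simp

lemma pmf_map_pos: "w \<in> set_pmf M \<Longrightarrow> pmf (map_pmf X M) (X w) > 0"
  by (simp add: pmf_positive_iff)

lemma condmi_pointwise:
  assumes fin: "finite (set_pmf M)"
  and eq: "\<And>w. w \<in> set_pmf M \<Longrightarrow> pmf (map_pmf (\<lambda>w. (X w, Y w, Z w)) M) (X w, Y w, Z w) * pmf (map_pmf Z M) (Z w)
      = pmf (map_pmf (\<lambda>w. (X w, Z w)) M) (X w, Z w) * pmf (map_pmf (\<lambda>w. (Y w, Z w)) M) (Y w, Z w)"
  shows "CondMI M X Y Z = 0"
proof -
  let ?a = "\<lambda>w. pmf (map_pmf (\<lambda>w. (X w, Z w)) M) (X w, Z w)"
  let ?b = "\<lambda>w. pmf (map_pmf (\<lambda>w. (Y w, Z w)) M) (Y w, Z w)"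
  let ?c = "\<lambda>w. pmf (map_pmf (\<lambda>w. (X w, Y w, Z w)) M) (X w, Y w, Z w)"
  let ?d = "\<lambda>w. pmf (map_pmf Z M) (Z w)"
  have "CondMI M X Y Z = (\<Sum>w\<in>set_pmf M. pmf M w * (log 2 (?c w) + log 2 (?d w) - log 2 (?a w) - log 2 (?b w)))"
    unfolding CondMI_def Ent_sum[OF fin]
    by (simp add: sum_subtractf sum.distrib algebra_simps sum_negf)
  also have "\<dots> = 0"
  proof (rule sum.neutral, intro ballI)
    fix w assume w: "w \<in> set_pmf M"
    have pa: "?a w > 0" "?b w > 0" "?c w > 0" "?d w > 0"
      using pmf_map_pos[OF w] by auto
    have "log 2 (?c w) + log 2 (?d w) = log 2 (?c w * ?d w)" using pa by (simp add: log_mult)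
    also have "\<dots> = log 2 (?a w * ?b w)" using eq[OF w] by simp
    also have "\<dots> = log 2 (?a w) + log 2 (?b w)" using pa by (simp add: log_mult)
    finally show "pmf M w * (log 2 (?c w) + log 2 (?d w) - log 2 (?a w) - log 2 (?b w)) = 0" by simp
  qed
  finally show ?thesis .
qed

lemma prob_pair_fin:
  assumes "finite (set_pmf M)" "finite (set_pmf N)"
  shows "measure (pair_pmf M N) (A \<times> B) = measure M A * measure N B"
proof -
  have "measure (pair_pmf M N) (A \<times> B) = measure (pair_pmf M N) ((A \<times> B) \<inter> set_pmf (pair_pmf M N))"
    by (rule measure_Int_set_pmf[symmetric])
  also have "(A \<times> B) \<inter> set_pmf (pair_pmf M N) = (A \<inter> set_pmf M) \<times> (B \<inter> set_pmf N)" by auto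
  also have "measure (pair_pmf M N) \<dots> = measure M (A \<inter> set_pmf M) * measure N (B \<inter> set_pmf N)"
    using assms by (intro measure_pmf_prob_product) (auto intro: countable_finite)
  finally show ?thesis using measure_Int_set_pmf[of "pair_pmf M N" "A \<times> B"] by (simp add: measure_Int_set_pmf)
qed

lemma condmi_indep:
  assumes fin: "finite (set_pmf M)"
  and pr: "map_pmf (\<lambda>w. (R w, B w)) M = pair_pmf MR MB"
  and X: "\<And>w. w \<in> set_pmf M \<Longrightarrow> X w = F (R w) (g (B w))"
  and Y: "\<And>w. w \<in> set_pmf M \<Longrightarrow> Y w = f (B w)"
  and Z: "\<And>w. w \<in> set_pmf M \<Longrightarrow> Z w = g (B w)"
  shows "CondMI M X Y Z = 0"
proof (rule condmi_pointwise[OF fin])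
  fix w assume w: "w \<in> set_pmf M"
  let ?p = "pair_pmf MR MB"
  have fR: "finite (set_pmf MR)" and fB: "finite (set_pmf MB)"
  proof -
    have "set_pmf MR = fst ` set_pmf ?p" by (metis map_fst_pair_pmf set_map_pmf)
    also have "set_pmf ?p = (\<lambda>w. (R w, B w)) ` set_pmf M" by (simp flip: pr)
    finally show "finite (set_pmf MR)" using fin by simp
  next
    have "set_pmf MB = snd ` set_pmf ?p" by (metis map_snd_pair_pmf set_map_pmf)
    also have "set_pmf ?p = (\<lambda>w. (R w, B w)) ` set_pmf M" by (simp flip: pr)
    finally show "finite (set_pmf MB)" using fin by simp
  qed
  have m: "map_pmf h M = map_pmf (\<lambda>(r,b). h' r b) ?p" if "\<And>w. w \<in> set_pmf M \<Longrightarrow> h w = h' (R w) (B w)" for h :: "_ \<Rightarrow> 'z" and h'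
  proof -
    have "map_pmf h M = map_pmf (\<lambda>(r,b). h' r b) (map_pmf (\<lambda>w. (R w, B w)) M)"
      by (simp add: pmf.map_comp o_def that cong: map_pmf_cong)
    then show ?thesis by (simp add: pr)
  qed
  define x y z where "x = X w" "y = Y w" "z = Z w"
  define \<phi> where "\<phi> = measure MR {r. F r z = x}"
  have e1: "pmf (map_pmf (\<lambda>w. (X w, Y w, Z w)) M) (x,y,z) = \<phi> * measure MB {b. f b = y \<and> g b = z}"
  proof -
    have "map_pmf (\<lambda>w. (X w, Y w, Z w)) M = map_pmf (\<lambda>(r,b). (F r (g b), f b, g b)) ?p"
      by (rule m) (simp add: X Y Z)
    moreover have "(\<lambda>(r,b). (F r (g b), f b, g b)) -` {(x,y,z)} = {r. F r z = x} \<times> {b. f b = y \<and> g b = z}"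
      by auto
    ultimately show ?thesis by (simp add: pmf_map prob_pair_fin fR fB \<phi>_def)
  qed
  have e2: "pmf (map_pmf (\<lambda>w. (X w, Z w)) M) (x,z) = \<phi> * measure MB {b. g b = z}"
  proof -
    have "map_pmf (\<lambda>w. (X w, Z w)) M = map_pmf (\<lambda>(r,b). (F r (g b), g b)) ?p"
      by (rule m) (simp add: X Y Z)
    moreover have "(\<lambda>(r,b). (F r (g b), g b)) -` {(x,z)} = {r. F r z = x} \<times> {b. g b = z}"
      by auto
    ultimately show ?thesis by (simp add: pmf_map prob_pair_fin fR fB \<phi>_def)
  qed
  have e3: "pmf (map_pmf (\<lambda>w. (Y w, Z w)) M) (y,z) = measure MB {b. f b = y \<and> g b = z}"
  proof -
    have "map_pmf (\<lambda>w. (Y w, Z w)) M = map_pmf (\<lambda>(r,b). (f b, g b)) ?p"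
      by (rule m) (simp add: X Y Z)
    then have "pmf (map_pmf (\<lambda>w. (Y w, Z w)) M) (y,z) = measure ?p ((\<lambda>(r,b). (f b, g b)) -` {(y,z)})"
      by (simp add: pmf_map)
    also have "(\<lambda>(r,b). (f b, g b)) -` {(y,z)} = UNIV \<times> {b. f b = y \<and> g b = z}"
      by auto
    finally show ?thesis by (simp add: prob_pair_fin fR fB measure_pmf.prob_space)
  qed
  have e4: "pmf (map_pmf Z M) z = measure MB {b. g b = z}"
  proof -
    have "map_pmf Z M = map_pmf (\<lambda>(r,b). g b) ?p"
      by (rule m) (simp add: X Y Z)
    then have "pmf (map_pmf Z M) z = measure ?p ((\<lambda>(r,b). g b) -` {z})"
      by (simp add: pmf_map)
    also have "(\<lambda>(r,b). g b) -` {z} = UNIV \<times> {b. g b = z}"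
      by auto
    finally show ?thesis by (simp add: prob_pair_fin fR fB measure_pmf.prob_space)
  qed
  show "pmf (map_pmf (\<lambda>w. (X w, Y w, Z w)) M) (X w, Y w, Z w) * pmf (map_pmf Z M) (Z w) =
        pmf (map_pmf (\<lambda>w. (X w, Z w)) M) (X w, Z w) * pmf (map_pmf (\<lambda>w. (Y w, Z w)) M) (Y w, Z w)"
    using e1 e2 e3 e4 unfolding x_y_z_def by simp
qed

lemma ent_map_inj:
  assumes "inj f"
  shows "ent (map_pmf f p) = ent p"
proof -
  have "ent (map_pmf f p) = - (\<Sum>x\<in>f ` set_pmf p. pmf (map_pmf f p) x * log 2 (pmf (map_pmf f p) x))"
    unfolding ent_def by simp
  also have "\<dots> = - (\<Sum>x\<in>set_pmf p. pmf (map_pmf f p) (f x) * log 2 (pmf (map_pmf f p) (f x)))"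
    by (subst sum.reindex) (use assms in \<open>auto intro: inj_on_subset\<close>)
  also have "\<dots> = ent p" unfolding ent_def by (simp add: pmf_map_inj'[OF assms])
  finally show ?thesis .
qed

lemma condmi_sym: "CondMI M X Y Z = CondMI M Y X Z"
proof -
  have "Ent M (\<lambda>w. (Y w, X w, Z w)) = Ent M (\<lambda>w. (X w, Y w, Z w))"
  proof -
    have "map_pmf (\<lambda>w. (Y w, X w, Z w)) M = map_pmf (\<lambda>(a,b,c). (b,a,c)) (map_pmf (\<lambda>w. (X w, Y w, Z w)) M)"
      by (simp add: pmf.map_comp o_def)
    moreover have "inj (\<lambda>(a::'b,b::'c,c::'d). (b,a,c))" by (auto simp: inj_def)
    ultimately show ?thesis unfolding Ent_def
      by (simp add: ent_map_inj)
  qed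
  then show ?thesis unfolding CondMI_def by simp
qed

lemma condent_zero:
  assumes fin: "finite (set_pmf M)"
  and det: "\<And>w w'. w \<in> set_pmf M \<Longrightarrow> w' \<in> set_pmf M \<Longrightarrow> Y w = Y w' \<Longrightarrow> X w = X w'"
  shows "CondEnt M X Y = 0"
proof -
  have "pmf (map_pmf (\<lambda>w. (X w, Y w)) M) (X w, Y w) = pmf (map_pmf Y M) (Y w)" if w: "w \<in> set_pmf M" for w
  proof -
    have "{w'. (X w', Y w') = (X w, Y w)} \<inter> set_pmf M = {w'. Y w' = Y w} \<inter> set_pmf M"
      using det[OF w] by auto
    then have "measure M {w'. (X w', Y w') = (X w, Y w)} = measure M {w'. Y w' = Y w}"
      by (metis measure_Int_set_pmf)
    then show ?thesis by (simp add: pmf_map vimage_def)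
  qed
  then have "(\<Sum>w\<in>set_pmf M. pmf M w * log 2 (pmf (map_pmf (\<lambda>w. (X w, Y w)) M) (X w, Y w)))
     = (\<Sum>w\<in>set_pmf M. pmf M w * log 2 (pmf (map_pmf Y M) (Y w)))" by (intro sum.cong) auto
  then show ?thesis unfolding CondEnt_def Ent_sum[OF fin] by simp
qed

lemma ent_pmf_of_set:
  assumes "finite A" "A \<noteq> {}"
  shows "ent (pmf_of_set A) = log 2 (real (card A))"
proof -
  have c: "card A > 0" using assms by (simp add: card_gt_0_iff)
  have "ent (pmf_of_set A) = - (\<Sum>x\<in>A. (1 / real (card A)) * log 2 (1 / real (card A)))"
    unfolding ent_def using assms by simp
  also have "\<dots> = - log 2 (1 / real (card A))" using c by simp
  also have "\<dots> = log 2 (real (card A))" using c by (simp add: log_divide)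
  finally show ?thesis .
qed

lemma pair_pmf_of_set:
  assumes "finite A" "A \<noteq> {}" "finite B" "B \<noteq> {}"
  shows "pair_pmf (pmf_of_set A) (pmf_of_set B) = pmf_of_set (A \<times> B)"
  by (rule pmf_eqI) (auto simp: pmf_pair assms card_cartesian_product indicator_def)


lemma attrs_eq: "attrs N K = {f. \<forall>x. (x \<in> {..<N} \<longrightarrow> f x \<in> {..<K}) \<and> (x \<notin> {..<N} \<longrightarrow> f x = 0)}"
  unfolding attrs_def lessThan_iff not_less by blast

lemma finite_attrs: "finite (attrs N K)"
  unfolding attrs_eq by (rule finite_set_of_finite_funs) auto

lemma crs_eq: "crs m = {f. \<forall>x. (x \<in> {..<m} \<longrightarrow> f x \<in> UNIV) \<and> (x \<notin> {..<m} \<longrightarrow> f x = 0)}"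
  unfolding crs_def lessThan_iff not_less by blast

lemma finite_crs: "finite (crs m :: (nat \<Rightarrow> 'f::{finite,field}) set)"
  unfolding crs_eq by (rule finite_set_of_finite_funs) auto

lemma zero_crs[simp]: "(\<lambda>_. 0) \<in> crs m"
  unfolding crs_def by simp

lemma crs_ne[simp]: "crs m \<noteq> {}" using zero_crs by blast

lemma dbs_eq: "dbs N K L = {W. \<forall>v. (v \<in> attrs N K \<longrightarrow> W v \<in> crs L) \<and> (v \<notin> attrs N K \<longrightarrow> W v = (\<lambda>_. 0))}"
proof -
  have "(\<forall>v l. (v \<notin> attrs N K \<or> L \<le> l) \<longrightarrow> W v l = 0) \<longleftrightarrow> (\<forall>v. (v \<in> attrs N K \<longrightarrow> W v \<in> crs L) \<and> (v \<notin> attrs N K \<longrightarrow> W v = (\<lambda>_. 0)))"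
    for W :: "(nat \<Rightarrow> nat) \<Rightarrow> nat \<Rightarrow> 'a"
    unfolding crs_def fun_eq_iff by blast
  then show ?thesis unfolding dbs_def by blast
qed

lemma finite_dbs: "finite (dbs N K L :: ((nat \<Rightarrow> nat) \<Rightarrow> nat \<Rightarrow> 'f::{finite,field}) set)"
  unfolding dbs_eq by (rule finite_set_of_finite_funs) (simp_all add: finite_attrs finite_crs)

lemma zero_dbs[simp]: "(\<lambda>_ _. 0) \<in> dbs N K L"
  unfolding dbs_def by simp

lemma dbs_ne[simp]: "dbs N K L \<noteq> {}" using zero_dbs by blast


lemma card_crs: "card (crs m :: (nat \<Rightarrow> 'f::{finite,field}) set) = CARD('f) ^ m"
proof -
  have "bij_betw (\<lambda>S. map S [0..<m]) (crs m :: (nat \<Rightarrow> 'f) set) {xs. set xs \<subseteq> UNIV \<and> length xs = m}"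
  proof (rule bij_betwI[where g = "\<lambda>xs i. if i < m then xs ! i else 0"])
    show "(\<lambda>S. map S [0..<m]) \<in> crs m \<rightarrow> {xs. set xs \<subseteq> UNIV \<and> length xs = m}" by simp
    show "(\<lambda>xs i. if i < m then xs ! i else 0) \<in> {xs. set xs \<subseteq> UNIV \<and> length xs = m} \<rightarrow> crs m"
      by (simp add: crs_def)
    show "(\<lambda>i. if i < m then map x [0..<m] ! i else 0) = x" if "x \<in> crs m" for x
      using that unfolding crs_def fun_eq_iff by (simp add: not_less)
    show "map (\<lambda>i. if i < m then y ! i else 0) [0..<m] = y" if "y \<in> {xs. set xs \<subseteq> UNIV \<and> length xs = m}" for y
      using that by (intro nth_equalityI) simp_all
  qed
  then have "card (crs m :: (nat \<Rightarrow> 'f) set) = card {xs::'f list. set xs \<subseteq> UNIV \<and> length xs = m}"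
    by (rule bij_betw_same_card)
  also have "\<dots> = CARD('f) ^ m" by (rule card_lists_length_eq) simp
  finally show ?thesis .
qed

lemma crs_shift:
  fixes c :: "nat \<Rightarrow> 'f::{finite,field}"
  assumes "c \<in> crs m"
  shows "map_pmf (\<lambda>S i. S i + c i) (pmf_of_set (crs m)) = pmf_of_set (crs m)"
proof (rule map_pmf_of_set_bij_betw)
  show "bij_betw (\<lambda>S i. S i + c i) (crs m) (crs m)"
  proof (rule bij_betwI[where g = "\<lambda>S i. S i - c i"])
    show "(\<lambda>S i. S i + c i) \<in> crs m \<rightarrow> crs m" using assms by (simp add: crs_def)
    show "(\<lambda>S i. S i - c i) \<in> crs m \<rightarrow> crs m" using assms by (simp add: crs_def)
  qed simp_all
qed (simp_all add: finite_crs)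


fun enum :: "nat \<Rightarrow> nat \<Rightarrow> (nat \<Rightarrow> nat) list" where
  "enum K 0 = [\<lambda>_. 0]"
| "enum K (Suc d) = concat (map (\<lambda>k. map (\<lambda>u. u(d := k)) (enum K d)) [0..<K])"

lemma set_enum: "set (enum K d) = {u. (\<forall>i<d. u i < K) \<and> (\<forall>i\<ge>d. u i = 0)}"
proof (induction d)
  case 0
  then show ?case by (auto simp: fun_eq_iff)
next
  case (Suc d)
  show ?case
  proof
    show "set (enum K (Suc d)) \<subseteq> {u. (\<forall>i<Suc d. u i < K) \<and> (\<forall>i\<ge>Suc d. u i = 0)}"
    proof
      fix u assume "u \<in> set (enum K (Suc d))"
      then obtain k u0 where k: "k < K" and u0: "u0 \<in> set (enum K d)" and u: "u = u0(d := k)" by auto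
      show "u \<in> {u. (\<forall>i<Suc d. u i < K) \<and> (\<forall>i\<ge>Suc d. u i = 0)}"
        using k u0 Suc.IH unfolding u by (simp add: less_Suc_eq)
    qed
    show "{u. (\<forall>i<Suc d. u i < K) \<and> (\<forall>i\<ge>Suc d. u i = 0)} \<subseteq> set (enum K (Suc d))"
    proof
      fix u assume u: "u \<in> {u. (\<forall>i<Suc d. u i < K) \<and> (\<forall>i\<ge>Suc d. u i = 0)}"
      have a: "u(d := 0) \<in> set (enum K d)" using u Suc.IH by simp
      have b: "u = (u(d:=0))(d := u d)" by simp
      have c: "u d < K" using u by simp
      have e: "u \<in> (\<lambda>u'. u'(d := u d)) ` set (enum K d)"
        by (rule image_eqI[where x="u(d:=0)"]) (simp_all add: a)
      show "u \<in> set (enum K (Suc d))" using c e by auto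
    qed
  qed
qed

lemma distinct_enum: "0 < K \<Longrightarrow> distinct (enum K d)"
proof (induction d)
  case 0
  then show ?case by simp
next
  case (Suc d)
  have ne: "enum K d \<noteq> []"
  proof -
    have "(\<lambda>_. 0) \<in> set (enum K d)" using Suc.prems by (simp add: set_enum)
    then show ?thesis by auto
  qed
  have inj: "inj_on (\<lambda>u. u(d := k)) (set (enum K d))" for k
  proof (rule inj_onI)
    fix u u' assume a: "u \<in> set (enum K d)" "u' \<in> set (enum K d)" and b: "u(d := k) = u'(d := k)"
    show "u = u'"
    proof
      fix i show "u i = u' i"
      proof (cases "i = d")
        case True then show ?thesis using a by (simp add: set_enum)
      next
        case False then show ?thesis using b by (metis fun_upd_other)
      qed
    qed
  qed
  show ?case
  proof (simp only: enum.simps, rule distinct_concat)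
    show "distinct (map (\<lambda>k. map (\<lambda>u. u(d := k)) (enum K d)) [0..<K])"
    proof (subst distinct_map, intro conjI)
      show "distinct [0..<K]" by simp
      show "inj_on (\<lambda>k. map (\<lambda>u. u(d := k)) (enum K d)) (set [0..<K])"
      proof (rule inj_onI)
        fix k k' assume "map (\<lambda>u. u(d := k)) (enum K d) = map (\<lambda>u. u(d := k')) (enum K d)"
        then have "hd (map (\<lambda>u. u(d := k)) (enum K d)) = hd (map (\<lambda>u. u(d := k')) (enum K d))"
          by (rule arg_cong)
        then have "(hd (enum K d))(d := k) = (hd (enum K d))(d := k')"
          using ne by (simp add: hd_map)
        then have "((hd (enum K d))(d := k)) d = ((hd (enum K d))(d := k')) d" by simp
        then show "k = k'" by simp
      qed
    qed
    show "distinct ys" if ysin: "ys \<in> set (map (\<lambda>k. map (\<lambda>u. u(d := k)) (enum K d)) [0..<K])" for ys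
    proof -
      obtain k where "ys = map (\<lambda>u. u(d := k)) (enum K d)" using ysin by auto
      then show ?thesis using Suc.IH[OF Suc.prems] inj[of k] by (simp add: distinct_map)
    qed
    show "set ys \<inter> set zs = {}" if yz: "ys \<in> set (map (\<lambda>k. map (\<lambda>u. u(d := k)) (enum K d)) [0..<K])"
      "zs \<in> set (map (\<lambda>k. map (\<lambda>u. u(d := k)) (enum K d)) [0..<K])" "ys \<noteq> zs" for ys zs
    proof -
      obtain k k' where ys: "ys = map (\<lambda>u. u(d := k)) (enum K d)" and zs: "zs = map (\<lambda>u. u(d := k')) (enum K d)"
        using yz(1,2) by auto
      with yz(3) have "k \<noteq> k'" by auto
      show ?thesis
      proof (rule ccontr)
        assume "set ys \<inter> set zs \<noteq> {}"
        then obtain x where "x \<in> set ys" "x \<in> set zs" by blast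
        then obtain u u' where "x = u(d := k)" "x = u'(d := k')"
          unfolding ys zs set_map by (elim imageE) metis
        then have "(u(d := k)) d = (u'(d := k')) d" by simp
        then show False using \<open>k \<noteq> k'\<close> by simp
      qed
    qed
  qed
qed


definition TT :: "nat \<Rightarrow> nat \<Rightarrow> nat" where "TT K D = length (enum K D)"
definition vlow :: "nat \<Rightarrow> (nat \<Rightarrow> nat) \<Rightarrow> (nat \<Rightarrow> nat)" where "vlow D v = (\<lambda>i. if i < D then v i else 0)"
definition venc :: "nat \<Rightarrow> nat \<Rightarrow> nat \<Rightarrow> (nat \<Rightarrow> nat option) \<Rightarrow> 'f::{finite,field} list" where
  "venc N D K r = map (\<lambda>p. if r (D + p div K) = Some (p mod K) then 1 else 0) [0..<(N-D)*K]"
definition mkQl :: "nat \<Rightarrow> nat \<Rightarrow> nat \<Rightarrow> (nat \<Rightarrow> nat) \<Rightarrow> 'f::{finite,field} list \<Rightarrow> nat \<Rightarrow> 'f list" where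
  "mkQl N D K v al = (\<lambda>n. if n < D then map (\<lambda>j. al ! (n * TT K D + j) - (if enum K D ! j = vlow D v then 1 else 0)) [0..<TT K D]
      else if n = D then al @ venc N D K (rv v {D..<N}) else [])"
definition mkQ :: "nat \<Rightarrow> nat \<Rightarrow> nat \<Rightarrow> (nat \<Rightarrow> nat) \<Rightarrow> (nat \<Rightarrow> 'f::{finite,field}) \<Rightarrow> nat \<Rightarrow> 'f list" where
  "mkQ N D K v \<alpha> = mkQl N D K v (map \<alpha> [0..<D * TT K D])"
definition qdf :: "nat \<Rightarrow> nat \<Rightarrow> nat \<Rightarrow> (nat \<Rightarrow> nat) \<Rightarrow> (nat \<Rightarrow> 'f::{finite,field} list) pmf" where
  "qdf N D K v = map_pmf (mkQ N D K v) (pmf_of_set (crs (D * TT K D)))"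
definition mrg :: "nat \<Rightarrow> (nat \<Rightarrow> nat option) \<Rightarrow> (nat \<Rightarrow> nat) \<Rightarrow> (nat \<Rightarrow> nat)" where
  "mrg D kn u = (\<lambda>i. if i < D then u i else (case kn i of None \<Rightarrow> 0 | Some x \<Rightarrow> x))"
definition sumC :: "nat \<Rightarrow> nat \<Rightarrow> 'f::{finite,field} list \<Rightarrow> nat \<Rightarrow> nat \<Rightarrow> nat \<Rightarrow> (nat \<Rightarrow> nat option) \<Rightarrow> ((nat\<Rightarrow>nat) \<Rightarrow> nat \<Rightarrow> 'f) \<Rightarrow> 'f" where
  "sumC K D q off n k kn Wr = (\<Sum>j<TT K D. q ! (off + j) * (if (enum K D ! j) n = k then Wr (mrg D kn (enum K D ! j)) n else 0))"
definition ansf :: "nat \<Rightarrow> nat \<Rightarrow> nat \<Rightarrow> 'f list \<Rightarrow> (nat \<Rightarrow> nat option) \<Rightarrow> ((nat \<Rightarrow> nat) \<Rightarrow> nat \<Rightarrow> 'f) \<Rightarrow> (nat \<Rightarrow> 'f::{finite,field}) \<Rightarrow> 'f list" where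
  "ansf D K = (\<lambda>n q kn Wr S. if n < D then [S (n*K + the (kn n)) + sumC K D q 0 n (the (kn n)) kn Wr]
    else map (\<lambda>i. S i + sumC K D q ((i div K) * TT K D) (i div K) (i mod K) kn Wr) [0..<K*D])"
definition cf :: "nat \<Rightarrow> nat \<Rightarrow> nat \<Rightarrow> nat" where "cf D K = (\<lambda>n. if n < D then 1 else K*D)"
definition mrgv :: "nat \<Rightarrow> nat \<Rightarrow> (nat \<Rightarrow> nat) \<Rightarrow> (nat \<Rightarrow> nat) \<Rightarrow> (nat \<Rightarrow> nat)" where
  "mrgv N D v u = (\<lambda>i. if i < D then u i else if i < N then v i else 0)"
definition Cv :: "nat \<Rightarrow> nat \<Rightarrow> nat \<Rightarrow> (nat \<Rightarrow> nat) \<Rightarrow> 'f::{finite,field} list \<Rightarrow> ((nat\<Rightarrow>nat) \<Rightarrow> nat \<Rightarrow> 'f) \<Rightarrow> nat \<Rightarrow> nat \<Rightarrow> 'f" where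
  "Cv N D K v al W n k = (\<Sum>j<TT K D. al ! (n * TT K D + j) * (if (enum K D ! j) n = k then W (mrgv N D v (enum K D ! j)) n else 0))"



lemma vlow_in: "v \<in> attrs N K \<Longrightarrow> D \<le> N \<Longrightarrow> vlow D v \<in> set (enum K D)"
  unfolding set_enum vlow_def attrs_def by simp

lemma mrg_known: "n \<le> D \<Longrightarrow> mrg D (known N D v n) u = mrgv N D v u"
  unfolding mrg_def known_def mrgv_def by (rule ext) simp

lemma mrgv_attrs: "v \<in> attrs N K \<Longrightarrow> D \<le> N \<Longrightarrow> u \<in> set (enum K D) \<Longrightarrow> mrgv N D v u \<in> attrs N K"
  unfolding attrs_def set_enum mrgv_def by simp

lemma mrgv_accD: "v \<in> attrs N K \<Longrightarrow> D \<le> N \<Longrightarrow> u \<in> set (enum K D) \<Longrightarrow> mrgv N D v u \<in> acc N D K v D"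
  using mrgv_attrs unfolding acc_def by (simp add: mrgv_def)

lemma mrgv_accn: "v \<in> attrs N K \<Longrightarrow> D \<le> N \<Longrightarrow> u \<in> set (enum K D) \<Longrightarrow> n < D \<Longrightarrow> u n = v n \<Longrightarrow> mrgv N D v u \<in> acc N D K v n"
  using mrgv_attrs unfolding acc_def by (simp add: mrgv_def)

lemma mrgv_vlow: "v \<in> attrs N K \<Longrightarrow> D \<le> N \<Longrightarrow> mrgv N D v (vlow D v) = v"
  unfolding attrs_def mrgv_def vlow_def by (rule ext) (simp add: not_less)

lemma nth_upt_mult:
  fixes n D j t :: nat
  assumes "n < D" "j < t"
  shows "n * t + j < D * t"
proof -
  have "n * t + j < n * t + t" using assms(2) by linarith
  also have "\<dots> = Suc n * t" by simp
  also have "\<dots> \<le> D * t" using assms by (intro mult_right_mono) simp_all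
  finally show ?thesis .
qed

lemma idx_lt: "(n::nat) < D \<Longrightarrow> k < K \<Longrightarrow> n * K + k < K * D"
  using nth_upt_mult[of n D k K] by (simp only: mult.commute[of K D])



lemma ans_central:
  fixes \<alpha> :: "nat \<Rightarrow> 'f::{finite,field}"
  assumes v: "v \<in> attrs N K" and DN: "D \<le> N" and K: "0 < K"
  shows "answer N D K (ansf D K) D (v, mkQ N D K v \<alpha>, W, S)
       = map (\<lambda>i. S i + Cv N D K v (map \<alpha> [0..<D * TT K D]) W (i div K) (i mod K)) [0..<K*D]"
proof -
  let ?al = "map \<alpha> [0..<D * TT K D]"
  have "sumC K D (mkQ N D K v \<alpha> D) (i div K * TT K D) (i div K) (i mod K) (known N D v D) (rdb W (acc N D K v D))
        = Cv N D K v ?al W (i div K) (i mod K)" if i: "i < K * D" for i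
  proof -
    have idv: "i div K < D" using i K by (simp add: less_mult_imp_div_less mult.commute)
    show ?thesis
      unfolding sumC_def Cv_def
    proof (rule sum.cong[OF refl])
      fix j assume j: "j \<in> {..<TT K D}"
      have lt: "i div K * TT K D + j < D * TT K D" using nth_upt_mult[OF idv, of j] j by simp
      have q: "mkQ N D K v \<alpha> D ! (i div K * TT K D + j) = ?al ! (i div K * TT K D + j)"
        unfolding mkQ_def mkQl_def using lt by (simp add: nth_append)
      have ej: "enum K D ! j \<in> set (enum K D)" using j unfolding TT_def by simp
      have r: "rdb W (acc N D K v D) (mrgv N D v (enum K D ! j)) = W (mrgv N D v (enum K D ! j))"
        unfolding rdb_def using mrgv_accD[OF v DN ej] by simp
      show "mkQ N D K v \<alpha> D ! (i div K * TT K D + j) *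
          (if (enum K D ! j) (i div K) = i mod K then rdb W (acc N D K v D) (mrg D (known N D v D) (enum K D ! j)) (i div K) else 0) =
          ?al ! (i div K * TT K D + j) *
          (if (enum K D ! j) (i div K) = i mod K then W (mrgv N D v (enum K D ! j)) (i div K) else 0)"
        using q r by (simp add: mrg_known)
    qed
  qed
  then show ?thesis
    unfolding answer_def ansf_def by simp
qed

lemma ans_ded:
  fixes \<alpha> :: "nat \<Rightarrow> 'f::{finite,field}"
  assumes v: "v \<in> attrs N K" and DN: "D \<le> N" and K: "0 < K" and n: "n < D"
  shows "answer N D K (ansf D K) n (v, mkQ N D K v \<alpha>, W, S)
       = [S (n * K + v n) + (\<Sum>j<TT K D. (map \<alpha> [0..<D * TT K D] ! (n * TT K D + j) - (if enum K D ! j = vlow D v then 1 else 0))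
              * (if (enum K D ! j) n = v n then W (mrgv N D v (enum K D ! j)) n else 0))]"
proof -
  have kn: "the (known N D v n n) = v n" unfolding known_def using n by simp
  have "sumC K D (mkQ N D K v \<alpha> n) 0 n (v n) (known N D v n) (rdb W (acc N D K v n))
     = (\<Sum>j<TT K D. (map \<alpha> [0..<D * TT K D] ! (n * TT K D + j) - (if enum K D ! j = vlow D v then 1 else 0))
              * (if (enum K D ! j) n = v n then W (mrgv N D v (enum K D ! j)) n else 0))"
    unfolding sumC_def
  proof (rule sum.cong[OF refl])
    fix j assume j: "j \<in> {..<TT K D}"
    have q: "mkQ N D K v \<alpha> n ! (0 + j) = map \<alpha> [0..<D * TT K D] ! (n * TT K D + j) - (if enum K D ! j = vlow D v then 1 else 0)"
      unfolding mkQ_def mkQl_def using n j by simp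
    have ej: "enum K D ! j \<in> set (enum K D)" using j unfolding TT_def by simp
    have r: "(enum K D ! j) n = v n \<Longrightarrow> rdb W (acc N D K v n) (mrgv N D v (enum K D ! j)) = W (mrgv N D v (enum K D ! j))"
      unfolding rdb_def using mrgv_accn[OF v DN ej n] by simp
    show "mkQ N D K v \<alpha> n ! (0 + j) * (if (enum K D ! j) n = v n then rdb W (acc N D K v n) (mrg D (known N D v n) (enum K D ! j)) n else 0)
       = (map \<alpha> [0..<D * TT K D] ! (n * TT K D + j) - (if enum K D ! j = vlow D v then 1 else 0))
              * (if (enum K D ! j) n = v n then W (mrgv N D v (enum K D ! j)) n else 0)"
      using q r n by (simp add: mrg_known)
  qed
  then show ?thesis unfolding answer_def ansf_def using n kn by simp
qed

lemma cancel:
  fixes \<alpha> :: "nat \<Rightarrow> 'f::{finite,field}"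
  assumes v: "v \<in> attrs N K" and DN: "D \<le> N" and K: "0 < K" and n: "n < D"
  shows "Cv N D K v (map \<alpha> [0..<D * TT K D]) W n (v n)
       - (\<Sum>j<TT K D. (map \<alpha> [0..<D * TT K D] ! (n * TT K D + j) - (if enum K D ! j = vlow D v then 1 else 0))
              * (if (enum K D ! j) n = v n then W (mrgv N D v (enum K D ! j)) n else 0)) = W v n"
proof -
  let ?X = "\<lambda>j. (if (enum K D ! j) n = v n then W (mrgv N D v (enum K D ! j)) n else 0)"
  obtain j0 where j0: "j0 < TT K D" "enum K D ! j0 = vlow D v"
    using vlow_in[OF v DN] unfolding TT_def by (metis in_set_conv_nth)
  have dj: "enum K D ! j = vlow D v \<longleftrightarrow> j = j0" if "j < TT K D" for j
    using distinct_enum[OF K] j0 that unfolding TT_def by (metis nth_eq_iff_index_eq)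
  have "Cv N D K v (map \<alpha> [0..<D * TT K D]) W n (v n)
       - (\<Sum>j<TT K D. (map \<alpha> [0..<D * TT K D] ! (n * TT K D + j) - (if enum K D ! j = vlow D v then 1 else 0)) * ?X j)
      = (\<Sum>j<TT K D. (if enum K D ! j = vlow D v then 1 else 0) * ?X j)"
    unfolding Cv_def by (simp add: sum_subtractf[symmetric] algebra_simps)
  also have "\<dots> = (\<Sum>j<TT K D. (if j = j0 then ?X j0 else 0))"
    by (rule sum.cong[OF refl]) (simp add: dj)
  also have "\<dots> = ?X j0" using j0 by simp
  also have "\<dots> = (if vlow D v n = v n then W (mrgv N D v (vlow D v)) n else 0)" by (simp only: j0(2))
  also have "\<dots> = W v n" using n by (simp add: mrgv_vlow[OF v DN]) (simp add: vlow_def)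
  finally show ?thesis .
qed


definition UU :: "nat \<Rightarrow> nat \<Rightarrow> nat \<Rightarrow> nat \<Rightarrow> nat \<Rightarrow> ((nat \<Rightarrow> 'f::{finite,field}) \<times> ((nat \<Rightarrow> nat) \<Rightarrow> nat \<Rightarrow> 'f) \<times> (nat \<Rightarrow> 'f)) set" where
  "UU N D K L m = crs (D * TT K D) \<times> (dbs N K L \<times> crs m)"

lemma finite_UU: "finite (UU N D K L m)"
  unfolding UU_def by (simp add: finite_crs finite_dbs)

lemma UU_ne: "UU N D K L m \<noteq> {}"
  unfolding UU_def by simp

lemma pmf_UU: "pmf_of_set (UU N D K L m :: (_ \<times> _ \<times> (nat \<Rightarrow> 'f::{finite,field})) set)
   = pair_pmf (pmf_of_set (crs (D * TT K D))) (pair_pmf (pmf_of_set (dbs N K L)) (pmf_of_set (crs m)))"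
  unfolding UU_def
  by (simp add: pair_pmf_of_set finite_crs finite_dbs)

lemma outcome_eq:
  "outcome N K L m P (qdf N D K) = bind_pmf P (\<lambda>v. map_pmf (\<lambda>(\<alpha>,W,S). (v, mkQ N D K v \<alpha>, W, S)) (pmf_of_set (UU N D K L m :: (_ \<times> _ \<times> (nat \<Rightarrow> 'f::{finite,field})) set)))"
  unfolding outcome_def qdf_def pmf_UU pair_pmf_def
  by (simp add: bind_map_pmf map_bind_pmf bind_assoc_pmf bind_return_pmf map_pmf_def)

lemma set_outcome:
  assumes "w \<in> set_pmf (outcome N K L m P (qdf N D K) :: (_ \<times> _ \<times> _ \<times> (nat \<Rightarrow> 'f::{finite,field})) pmf)"
  obtains v \<alpha> W S where "w = (v, mkQ N D K v \<alpha>, W, S)" "v \<in> set_pmf P" "\<alpha> \<in> crs (D * TT K D)" "W \<in> dbs N K L" "S \<in> crs m"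
  using assms unfolding outcome_eq
  by (auto simp: set_pmf_of_set finite_UU UU_ne) (auto simp: UU_def)

lemma finite_outcome:
  assumes "finite (set_pmf P)"
  shows "finite (set_pmf (outcome N K L m P (qdf N D K) :: (_ \<times> _ \<times> _ \<times> (nat \<Rightarrow> 'f::{finite,field})) pmf))"
  unfolding outcome_eq using assms
  by (simp add: set_pmf_of_set finite_UU UU_ne)

lemma pair_from_v:
  assumes "\<And>v. v \<in> set_pmf P \<Longrightarrow> map_pmf (\<lambda>u. (\<rho> v u, \<beta> v u)) U = pair_pmf MR (Kb v)"
  shows "bind_pmf P (\<lambda>v. map_pmf (\<lambda>u. (\<rho> v u, (v, \<beta> v u))) U) = pair_pmf MR (bind_pmf P (\<lambda>v. map_pmf (\<lambda>b. (v, b)) (Kb v)))"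
proof -
  have "bind_pmf P (\<lambda>v. map_pmf (\<lambda>u. (\<rho> v u, (v, \<beta> v u))) U)
      = bind_pmf P (\<lambda>v. map_pmf (\<lambda>(r,b). (r, (v, b))) (map_pmf (\<lambda>u. (\<rho> v u, \<beta> v u)) U))"
    by (simp add: pmf.map_comp o_def)
  also have "\<dots> = bind_pmf P (\<lambda>v. map_pmf (\<lambda>(r,b). (r, (v, b))) (pair_pmf MR (Kb v)))"
    by (rule bind_pmf_cong[OF refl]) (simp add: assms)
  also have "\<dots> = pair_pmf MR (bind_pmf P (\<lambda>v. map_pmf (\<lambda>b. (v, b)) (Kb v)))"
    unfolding pair_pmf_def
    by (simp add: map_bind_pmf bind_map_pmf bind_assoc_pmf bind_return_pmf map_pmf_def)
       (subst bind_commute_pmf, simp)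
  finally show ?thesis .
qed

lemma outcome_pair:
  fixes R :: "(nat \<Rightarrow> nat) \<times> (nat \<Rightarrow> 'f list) \<times> ((nat \<Rightarrow> nat) \<Rightarrow> nat \<Rightarrow> 'f) \<times> (nat \<Rightarrow> 'f::{finite,field}) \<Rightarrow> 'r"
  assumes RB: "\<And>v \<alpha> W S. v \<in> set_pmf P \<Longrightarrow> (\<alpha>, W, S) \<in> UU N D K L m \<Longrightarrow>
        R (v, mkQ N D K v \<alpha>, W, S) = \<rho> v (\<alpha>, W, S) \<and> B (v, mkQ N D K v \<alpha>, W, S) = (v, \<beta> v (\<alpha>, W, S))"
  and pr: "\<And>v. v \<in> set_pmf P \<Longrightarrow> map_pmf (\<lambda>u. (\<rho> v u, \<beta> v u)) (pmf_of_set (UU N D K L m)) = pair_pmf MR (Kb v)"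
  shows "map_pmf (\<lambda>w. (R w, B w)) (outcome N K L m P (qdf N D K)) = pair_pmf MR (bind_pmf P (\<lambda>v. map_pmf (\<lambda>b. (v, b)) (Kb v)))"
proof -
  have "map_pmf (\<lambda>w. (R w, B w)) (outcome N K L m P (qdf N D K))
     = bind_pmf P (\<lambda>v. map_pmf (\<lambda>u. (\<rho> v u, (v, \<beta> v u))) (pmf_of_set (UU N D K L m)))"
    unfolding outcome_eq map_bind_pmf
  proof (rule bind_pmf_cong[OF refl])
    fix v assume v: "v \<in> set_pmf P"
    show "map_pmf (\<lambda>w. (R w, B w)) (map_pmf (\<lambda>(\<alpha>, W, S). (v, mkQ N D K v \<alpha>, W, S)) (pmf_of_set (UU N D K L m))) =
          map_pmf (\<lambda>u. (\<rho> v u, v, \<beta> v u)) (pmf_of_set (UU N D K L m))"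
      unfolding pmf.map_comp
      by (rule map_pmf_cong[OF refl]) (use RB[OF v] in \<open>auto simp: set_pmf_of_set finite_UU UU_ne\<close>)
  qed
  also have "\<dots> = pair_pmf MR (bind_pmf P (\<lambda>v. map_pmf (\<lambda>b. (v, b)) (Kb v)))"
    by (rule pair_from_v) (rule pr)
  finally show ?thesis .
qed


lemma pv_MI:
  "map_pmf (\<lambda>u. (fst (snd u), mkQ N D K v (fst u))) (pmf_of_set (UU N D K L m :: (_ \<times> _ \<times> (nat \<Rightarrow> 'f::{finite,field})) set))
   = pair_pmf (pmf_of_set (dbs N K L)) (map_pmf (mkQ N D K v) (pmf_of_set (crs (D * TT K D))))"
proof -
  let ?UA = "pmf_of_set (crs (D * TT K D)) :: (nat \<Rightarrow> 'f) pmf"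
  let ?UW = "pmf_of_set (dbs N K L) :: ((nat \<Rightarrow> nat) \<Rightarrow> nat \<Rightarrow> 'f) pmf"
  let ?US = "pmf_of_set (crs m) :: (nat \<Rightarrow> 'f) pmf"
  have "map_pmf (\<lambda>u. (fst (snd u), mkQ N D K v (fst u))) (pair_pmf ?UA (pair_pmf ?UW ?US))
      = map_pmf (\<lambda>(x,y). (y,x)) (map_pmf (\<lambda>(a,b). (mkQ N D K v a, fst b)) (pair_pmf ?UA (pair_pmf ?UW ?US)))"
    by (simp add: pmf.map_comp o_def case_prod_beta)
  also have "\<dots> = map_pmf (\<lambda>(x,y). (y,x)) (pair_pmf (map_pmf (mkQ N D K v) ?UA) (map_pmf fst (pair_pmf ?UW ?US)))"
    by (simp add: map_pair)
  also have "\<dots> = map_pmf (\<lambda>(x,y). (y,x)) (pair_pmf (map_pmf (mkQ N D K v) ?UA) ?UW)"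
    by (simp only: map_fst_pair_pmf)
  also have "\<dots> = pair_pmf ?UW (map_pmf (mkQ N D K v) ?UA)"
    by (rule pair_commute_pmf[symmetric])
  finally show ?thesis by (simp add: pmf_UU)
qed

lemma pv_central:
  "map_pmf (\<lambda>u. (map (fst u) [0..<D * TT K D], snd (snd u))) (pmf_of_set (UU N D K L m :: (_ \<times> _ \<times> (nat \<Rightarrow> 'f::{finite,field})) set))
   = pair_pmf (map_pmf (\<lambda>a. map a [0..<D * TT K D]) (pmf_of_set (crs (D * TT K D)))) (pmf_of_set (crs m))"
proof -
  let ?UA = "pmf_of_set (crs (D * TT K D)) :: (nat \<Rightarrow> 'f) pmf"
  let ?UW = "pmf_of_set (dbs N K L) :: ((nat \<Rightarrow> nat) \<Rightarrow> nat \<Rightarrow> 'f) pmf"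
  let ?US = "pmf_of_set (crs m) :: (nat \<Rightarrow> 'f) pmf"
  have "map_pmf (\<lambda>u. (map (fst u) [0..<D * TT K D], snd (snd u))) (pair_pmf ?UA (pair_pmf ?UW ?US))
      = map_pmf (\<lambda>(a,b). (map a [0..<D * TT K D], snd b)) (pair_pmf ?UA (pair_pmf ?UW ?US))"
    by (rule map_pmf_cong[OF refl]) (simp add: case_prod_beta)
  also have "\<dots> = pair_pmf (map_pmf (\<lambda>a. map a [0..<D * TT K D]) ?UA) ?US"
    by (simp add: map_pair map_snd_pair_pmf)
  finally show ?thesis by (simp add: pmf_UU)
qed

lemma mkQ_n:
  "n < D \<Longrightarrow> mkQ N D K v \<alpha> n = map (\<lambda>j. \<alpha> (n * TT K D + j) - (if enum K D ! j = vlow D v then 1 else 0)) [0..<TT K D]"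
  unfolding mkQ_def mkQl_def by (simp add: nth_upt_mult)

lemma pv_ded:
  assumes v: "v \<in> attrs N K" and DN: "D \<le> N" and K: "0 < K" and n: "n < D"
  shows "map_pmf (\<lambda>u. (mkQ N D K v (fst u) n, snd (snd u))) (pmf_of_set (UU N D K L m :: (_ \<times> _ \<times> (nat \<Rightarrow> 'f::{finite,field})) set))
   = pair_pmf (map_pmf (\<lambda>a. map (\<lambda>j. a (n * TT K D + j)) [0..<TT K D]) (pmf_of_set (crs (D * TT K D)))) (pmf_of_set (crs m))"
proof -
  let ?UA = "pmf_of_set (crs (D * TT K D)) :: (nat \<Rightarrow> 'f) pmf"
  let ?UW = "pmf_of_set (dbs N K L) :: ((nat \<Rightarrow> nat) \<Rightarrow> nat \<Rightarrow> 'f) pmf"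
  let ?US = "pmf_of_set (crs m) :: (nat \<Rightarrow> 'f) pmf"
  obtain j0 where j0: "j0 < TT K D" "enum K D ! j0 = vlow D v"
    using vlow_in[OF v DN] unfolding TT_def by (metis in_set_conv_nth)
  have dj: "enum K D ! j = vlow D v \<longleftrightarrow> j = j0" if "j < TT K D" for j
    using distinct_enum[OF K] j0 that unfolding TT_def by (metis nth_eq_iff_index_eq)
  define e :: "nat \<Rightarrow> 'f" where "e = (\<lambda>i. if i = n * TT K D + j0 then 1 else 0)"
  have e: "e \<in> crs (D * TT K D)" unfolding crs_def e_def using nth_upt_mult[OF n j0(1)] by simp
  have "map_pmf (\<lambda>a. mkQ N D K v a n) ?UA = map_pmf (\<lambda>a. mkQ N D K v a n) (map_pmf (\<lambda>S i. S i + e i) ?UA)"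
    by (simp add: crs_shift[OF e])
  also have "\<dots> = map_pmf (\<lambda>a. map (\<lambda>j. a (n * TT K D + j)) [0..<TT K D]) ?UA"
    unfolding pmf.map_comp o_def
  proof (rule map_pmf_cong[OF refl])
    fix a :: "nat \<Rightarrow> 'f"
    show "mkQ N D K v (\<lambda>i. a i + e i) n = map (\<lambda>j. a (n * TT K D + j)) [0..<TT K D]"
      unfolding mkQ_n[OF n]
    proof (rule map_cong[OF refl])
      fix j assume "j \<in> set [0..<TT K D]"
      then have j: "j < TT K D" by simp
      show "a (n * TT K D + j) + e (n * TT K D + j) - (if enum K D ! j = vlow D v then 1 else 0) = a (n * TT K D + j)"
        unfolding e_def using dj[OF j] by simp
    qed
  qed
  finally have sh: "map_pmf (\<lambda>a. mkQ N D K v a n) ?UA = map_pmf (\<lambda>a. map (\<lambda>j. a (n * TT K D + j)) [0..<TT K D]) ?UA" .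
  have "map_pmf (\<lambda>u. (mkQ N D K v (fst u) n, snd (snd u))) (pair_pmf ?UA (pair_pmf ?UW ?US))
      = map_pmf (\<lambda>(a,b). (mkQ N D K v a n, snd b)) (pair_pmf ?UA (pair_pmf ?UW ?US))"
    by (rule map_pmf_cong[OF refl]) (simp add: case_prod_beta)
  also have "\<dots> = pair_pmf (map_pmf (\<lambda>a. mkQ N D K v a n) ?UA) ?US"
    by (simp add: map_pair map_snd_pair_pmf)
  finally show ?thesis by (simp add: pmf_UU sh)
qed


definition cvec :: "nat \<Rightarrow> nat \<Rightarrow> nat \<Rightarrow> (nat \<Rightarrow> nat) \<Rightarrow> 'f::{finite,field} list \<Rightarrow> ((nat\<Rightarrow>nat) \<Rightarrow> nat \<Rightarrow> 'f) \<Rightarrow> nat \<Rightarrow> 'f" where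
  "cvec N D K v al W = (\<lambda>i. if i < K * D then Cv N D K v al W (i div K) (i mod K) else 0)"

definition W0 :: "nat \<Rightarrow> nat \<Rightarrow> nat \<Rightarrow> (nat \<Rightarrow> nat) \<Rightarrow> ((nat \<Rightarrow> nat) \<Rightarrow> nat \<Rightarrow> 'f::{finite,field}) set" where
  "W0 N K L v = {W \<in> dbs N K L. W v = (\<lambda>_. 0)}"

definition Psi :: "nat \<Rightarrow> nat \<Rightarrow> nat \<Rightarrow> (nat \<Rightarrow> nat) \<Rightarrow> (nat \<Rightarrow> 'f::{finite,field}) \<times> ((nat \<Rightarrow> nat) \<Rightarrow> nat \<Rightarrow> 'f) \<times> (nat \<Rightarrow> 'f)
   \<Rightarrow> ((nat \<Rightarrow> 'f) \<times> (nat \<Rightarrow> 'f) \<times> (nat \<Rightarrow> 'f)) \<times> ((nat \<Rightarrow> nat) \<Rightarrow> nat \<Rightarrow> 'f)" where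
  "Psi N D K v = (\<lambda>(\<alpha>, W, S). ((\<alpha>, (\<lambda>i. S i + cvec N D K v (map \<alpha> [0..<D * TT K D]) W i), W v), W(v := (\<lambda>_. 0))))"

lemma finite_W0: "finite (W0 N K L v :: ((nat \<Rightarrow> nat) \<Rightarrow> nat \<Rightarrow> 'f::{finite,field}) set)"
  unfolding W0_def by (rule finite_subset[OF _ finite_dbs]) blast

lemma W0_ne: "W0 N K L v \<noteq> {}"
proof -
  have "(\<lambda>_ _. 0) \<in> W0 N K L v" unfolding W0_def by simp
  then show ?thesis by blast
qed

lemma cvec_crs: "cvec N D K v al W \<in> crs (K * D)"
  unfolding cvec_def crs_def by simp

lemma Psi_in:
  assumes v: "v \<in> attrs N K" and uin: "u \<in> (UU N D K L (K * D) :: (_ \<times> _ \<times> (nat \<Rightarrow> 'f::{finite,field})) set)"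
  shows "Psi N D K v u \<in> (crs (D * TT K D) \<times> (crs (K * D) \<times> crs L)) \<times> W0 N K L v"
proof -
  obtain \<alpha> W S where u: "u = (\<alpha>, W, S)" and a: "\<alpha> \<in> crs (D * TT K D)" and W: "W \<in> dbs N K L" and S: "S \<in> crs (K * D)"
    using uin unfolding UU_def by auto
  have "(\<lambda>i. S i + cvec N D K v (map \<alpha> [0..<D * TT K D]) W i) \<in> crs (K * D)"
    using S cvec_crs[of N D K v "map \<alpha> [0..<D * TT K D]" W] unfolding crs_def by simp
  moreover have "W v \<in> crs L" using W v unfolding dbs_def crs_def by simp
  moreover have "W(v := (\<lambda>_. 0)) \<in> W0 N K L v" using W unfolding W0_def dbs_def by simp
  ultimately show "Psi N D K v u \<in> (crs (D * TT K D) \<times> (crs (K * D) \<times> crs L)) \<times> W0 N K L v"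
    unfolding u Psi_def using a by simp
qed

lemma Psi_inv_in:
  assumes v: "v \<in> attrs N K" and tin: "t \<in> (crs (D * TT K D) \<times> (crs (K * D) \<times> crs L)) \<times> (W0 N K L v :: ((nat \<Rightarrow> nat) \<Rightarrow> nat \<Rightarrow> 'f::{finite,field}) set)"
  shows "(case t of ((\<alpha>, S', x), W') \<Rightarrow> (\<alpha>, W'(v := x), (\<lambda>i. S' i - cvec N D K v (map \<alpha> [0..<D * TT K D]) (W'(v := x)) i)))
     \<in> UU N D K L (K * D)"
proof -
  obtain \<alpha> S' x W' where t: "t = ((\<alpha>, S', x), W')" and a: "\<alpha> \<in> crs (D * TT K D)" and S': "S' \<in> crs (K * D)"
    and x: "x \<in> crs L" and W': "W' \<in> W0 N K L v"
    using tin by auto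
  have W'd: "W' \<in> dbs N K L" using W' unfolding W0_def by simp
  have "W'(v := x) \<in> dbs N K L" unfolding dbs_def
  proof (intro CollectI allI impI)
    fix u l assume h: "u \<notin> attrs N K \<or> L \<le> l"
    show "(W'(v := x)) u l = 0"
    proof (cases "u = v")
      case True then have "L \<le> l" using h v by blast
      then show ?thesis using x True unfolding crs_def by simp
    next
      case False then show ?thesis using W'd h unfolding dbs_def by simp
    qed
  qed
  moreover have "(\<lambda>i. S' i - cvec N D K v (map \<alpha> [0..<D * TT K D]) (W'(v := x)) i) \<in> crs (K * D)"
    using S' cvec_crs[of N D K v "map \<alpha> [0..<D * TT K D]" "W'(v := x)"] unfolding crs_def by simp
  ultimately show "(case t of ((\<alpha>, S', x), W') \<Rightarrow> (\<alpha>, W'(v := x), (\<lambda>i. S' i - cvec N D K v (map \<alpha> [0..<D * TT K D]) (W'(v := x)) i)))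
     \<in> UU N D K L (K * D)"
    unfolding t UU_def using a by simp
qed


definition Psinv :: "nat \<Rightarrow> nat \<Rightarrow> nat \<Rightarrow> (nat \<Rightarrow> nat) \<Rightarrow> ((nat \<Rightarrow> 'f) \<times> (nat \<Rightarrow> 'f) \<times> (nat \<Rightarrow> 'f)) \<times> ((nat \<Rightarrow> nat) \<Rightarrow> nat \<Rightarrow> 'f::{finite,field})
   \<Rightarrow> (nat \<Rightarrow> 'f) \<times> ((nat \<Rightarrow> nat) \<Rightarrow> nat \<Rightarrow> 'f) \<times> (nat \<Rightarrow> 'f)" where
  "Psinv N D K v t = (fst (fst t), (snd t)(v := snd (snd (fst t))),
     (\<lambda>i. fst (snd (fst t)) i - cvec N D K v (map (fst (fst t)) [0..<D * TT K D]) ((snd t)(v := snd (snd (fst t)))) i))"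

lemma Psinv_in:
  assumes v: "v \<in> attrs N K" and tin: "t \<in> (crs (D * TT K D) \<times> (crs (K * D) \<times> crs L)) \<times> (W0 N K L v :: ((nat \<Rightarrow> nat) \<Rightarrow> nat \<Rightarrow> 'f::{finite,field}) set)"
  shows "Psinv N D K v t \<in> UU N D K L (K * D)"
proof -
  obtain \<alpha> S' x W' where t: "t = ((\<alpha>, S', x), W')" by (metis prod.collapse)
  show ?thesis using Psi_inv_in[OF v tin] unfolding t Psinv_def by simp
qed


lemma Psinv_Psi: "Psinv N D K v (Psi N D K v u) = u"
proof -
  obtain \<alpha> W S where u: "u = (\<alpha>, W, S)" by (metis prod.collapse)
  have h: "(W(v := (\<lambda>_. 0)))(v := W v) = W" by simp
  show ?thesis unfolding u Psi_def Psinv_def by (simp only: prod.case fst_conv snd_conv h add_diff_cancel)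
qed

lemma Psi_Psinv:
  assumes "t \<in> (crs (D * TT K D) \<times> (crs (K * D) \<times> crs L)) \<times> (W0 N K L v :: ((nat \<Rightarrow> nat) \<Rightarrow> nat \<Rightarrow> 'f::{finite,field}) set)"
  shows "Psi N D K v (Psinv N D K v t) = t"
proof -
  obtain \<alpha> S' x W' where t: "t = ((\<alpha>, S', x), W')" by (metis prod.collapse)
  have "W' v = (\<lambda>_. 0)" using assms unfolding t W0_def by simp
  then have h: "(W'(v := x))(v := (\<lambda>_. 0)) = W'" by (metis fun_upd_upd fun_upd_triv)
  have h2: "(W'(v := x)) v = x" by simp
  show ?thesis unfolding t Psi_def Psinv_def by (simp only: prod.case fst_conv snd_conv h h2 diff_add_cancel)
qed

lemma bij_Psi:
  assumes v: "v \<in> attrs N K"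
  shows "bij_betw (Psi N D K v) (UU N D K L (K * D) :: (_ \<times> _ \<times> (nat \<Rightarrow> 'f::{finite,field})) set)
           ((crs (D * TT K D) \<times> (crs (K * D) \<times> crs L)) \<times> W0 N K L v)"
proof (rule bij_betwI[where g = "Psinv N D K v"])
  show "Psi N D K v \<in> UU N D K L (K * D) \<rightarrow> (crs (D * TT K D) \<times> (crs (K * D) \<times> crs L)) \<times> W0 N K L v"
    by (rule Pi_I) (rule Psi_in[OF v])
  show "Psinv N D K v \<in> (crs (D * TT K D) \<times> (crs (K * D) \<times> crs L)) \<times> W0 N K L v \<rightarrow> UU N D K L (K * D)"
    by (rule Pi_I) (rule Psinv_in[OF v])
qed (simp_all add: Psinv_Psi Psi_Psinv)


lemma pv_sec:
  assumes v: "v \<in> attrs N K" and DN: "D \<le> N" and K: "0 < K"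
  shows "map_pmf (\<lambda>u. ((map (fst u) [0..<D * TT K D], answer N D K (ansf D K) D (v, mkQ N D K v (fst u), fst (snd u), snd (snd u)), fst (snd u) v),
                        (fst (snd u)) (v := (\<lambda>_. 0))))
          (pmf_of_set (UU N D K L (K * D) :: (_ \<times> _ \<times> (nat \<Rightarrow> 'f::{finite,field})) set))
   = pair_pmf (map_pmf (\<lambda>(\<alpha>, S', x). (map \<alpha> [0..<D * TT K D], map S' [0..<K * D], x))
                 (pmf_of_set (crs (D * TT K D) \<times> (crs (K * D) \<times> crs L))))
              (pmf_of_set (W0 N K L v))"
proof -
  let ?U = "pmf_of_set (UU N D K L (K * D) :: (_ \<times> _ \<times> (nat \<Rightarrow> 'f)) set)"
  let ?\<Phi> = "\<lambda>((\<alpha>, S', x), W'). ((map \<alpha> [0..<D * TT K D], map S' [0..<K * D], x), W')"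
  have "map_pmf (\<lambda>u. ((map (fst u) [0..<D * TT K D], answer N D K (ansf D K) D (v, mkQ N D K v (fst u), fst (snd u), snd (snd u)), fst (snd u) v),
                        (fst (snd u)) (v := (\<lambda>_. 0)))) ?U
      = map_pmf (\<lambda>u. ?\<Phi> (Psi N D K v u)) ?U"
  proof (rule map_pmf_cong[OF refl])
    fix u assume "u \<in> set_pmf ?U"
    obtain \<alpha> W S where u: "u = (\<alpha>, W, S)" by (cases u) auto
    have "answer N D K (ansf D K) D (v, mkQ N D K v \<alpha>, W, S) = map (\<lambda>i. S i + cvec N D K v (map \<alpha> [0..<D * TT K D]) W i) [0..<K * D]"
      unfolding ans_central[OF v DN K] cvec_def by simp
    then show "((map (fst u) [0..<D * TT K D], answer N D K (ansf D K) D (v, mkQ N D K v (fst u), fst (snd u), snd (snd u)), fst (snd u) v),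
                        (fst (snd u)) (v := (\<lambda>_. 0))) = ?\<Phi> (Psi N D K v u)"
      unfolding u Psi_def by simp
  qed
  also have "\<dots> = map_pmf ?\<Phi> (map_pmf (Psi N D K v) ?U)" by (simp add: pmf.map_comp o_def)
  also have "map_pmf (Psi N D K v) ?U = pmf_of_set ((crs (D * TT K D) \<times> (crs (K * D) \<times> crs L)) \<times> W0 N K L v)"
    by (rule map_pmf_of_set_bij_betw[OF bij_Psi[OF v] UU_ne finite_UU])
  also have "\<dots> = pair_pmf (pmf_of_set (crs (D * TT K D) \<times> (crs (K * D) \<times> crs L))) (pmf_of_set (W0 N K L v))"
    by (rule pair_pmf_of_set[symmetric]) (simp_all add: finite_crs finite_W0 W0_ne)
  also have "map_pmf ?\<Phi> \<dots> = pair_pmf (map_pmf (\<lambda>(\<alpha>, S', x). (map \<alpha> [0..<D * TT K D], map S' [0..<K * D], x))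
                 (pmf_of_set (crs (D * TT K D) \<times> (crs (K * D) \<times> crs L)))) (map_pmf id (pmf_of_set (W0 N K L v)))"
    by (subst map_pair[symmetric]) (rule map_pmf_cong[OF refl], auto)
  finally show ?thesis by (simp only: pmf.map_id)
qed


lemma dec_W:
  fixes \<alpha> :: "nat \<Rightarrow> 'f::{finite,field}"
  assumes v: "v \<in> attrs N K" and DN: "D \<le> N" and K: "0 < K" and n: "n < D"
  shows "answer N D K (ansf D K) n (v, mkQ N D K v \<alpha>, W, S)
       = [answer N D K (ansf D K) D (v, mkQ N D K v \<alpha>, W, S) ! (n * K + v n) - W v n]"
proof -
  have vn: "v n < K" using v n DN unfolding attrs_def by simp
  have i: "n * K + v n < K * D" by (rule idx_lt[OF n vn])
  have dv: "(n * K + v n) div K = n" using vn by simp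
  have md: "(n * K + v n) mod K = v n" using vn by simp
  have "answer N D K (ansf D K) D (v, mkQ N D K v \<alpha>, W, S) ! (n * K + v n)
      = S (n * K + v n) + Cv N D K v (map \<alpha> [0..<D * TT K D]) W n (v n)"
    unfolding ans_central[OF v DN K] using i dv md by simp
  then show ?thesis
    unfolding ans_ded[OF v DN K n] using cancel[OF v DN K n, of \<alpha> W]
    by (simp add: algebra_simps)
qed

lemma venc_nth:
  assumes "p < (N - D) * K"
  shows "(venc N D K r :: 'f::{finite,field} list) ! p = (if r (D + p div K) = Some (p mod K) then 1 else 0)"
  unfolding venc_def using assms by simp

lemma length_venc: "length (venc N D K r) = (N - D) * K"
  unfolding venc_def by simp

lemma v_rec:
  fixes \<alpha> \<alpha>' :: "nat \<Rightarrow> 'f::{finite,field}"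
  assumes v: "v \<in> attrs N K" and v': "v' \<in> attrs N K" and DN: "D \<le> N" and D1: "1 \<le> D" and K: "0 < K"
  and QD: "mkQ N D K v \<alpha> D = mkQ N D K v' \<alpha>' D" and Q0: "mkQ N D K v \<alpha> 0 = mkQ N D K v' \<alpha>' 0"
  shows "v = v'"
proof
  fix i
  let ?T = "TT K D"
  have al: "map \<alpha> [0..<D * ?T] @ venc N D K (rv v {D..<N}) = map \<alpha>' [0..<D * ?T] @ venc N D K (rv v' {D..<N})"
    using QD unfolding mkQ_def mkQl_def by simp
  then have aleq: "map \<alpha> [0..<D * ?T] = map \<alpha>' [0..<D * ?T]" and veq: "(venc N D K (rv v {D..<N}) :: 'f list) = venc N D K (rv v' {D..<N})"
    by simp_all
  show "v i = v' i"
  proof (cases "i < D")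
    case True
    obtain j0 where j0: "j0 < ?T" "enum K D ! j0 = vlow D v"
      using vlow_in[OF v DN] unfolding TT_def by (metis in_set_conv_nth)
    have "mkQ N D K v \<alpha> 0 ! j0 = mkQ N D K v' \<alpha>' 0 ! j0" using Q0 by simp
    then have "\<alpha> j0 - (if enum K D ! j0 = vlow D v then 1 else 0) = \<alpha>' j0 - (if enum K D ! j0 = vlow D v' then 1 else 0)"
      unfolding mkQ_n[OF order.strict_trans2[OF zero_less_one D1]] using j0(1) by simp
    moreover have "\<alpha> j0 = \<alpha>' j0"
    proof -
      have "j0 < D * ?T" using nth_upt_mult[OF order.strict_trans2[OF zero_less_one D1] j0(1)] by simp
      then show ?thesis using arg_cong[OF aleq, of "\<lambda>xs. xs ! j0"] by simp
    qed
    ultimately have "enum K D ! j0 = vlow D v'" using j0(2) by (auto split: if_splits)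
    then have "vlow D v = vlow D v'" using j0(2) by simp
    then show ?thesis using True unfolding vlow_def by (metis (full_types))
  next
    case False
    show ?thesis
    proof (cases "i < N")
      case True
      let ?p = "(i - D) * K + v i"
      have vi: "v i < K" using v True unfolding attrs_def by simp
      have p: "?p < (N - D) * K"
      proof -
        have "i - D < N - D" using True False by simp
        then show ?thesis using idx_lt[of "i - D" "N - D" "v i" K] vi by (simp add: mult.commute)
      qed
      have pd: "D + ?p div K = i" using vi False by simp
      have pm: "?p mod K = v i" using vi by simp
      have "(venc N D K (rv v {D..<N}) :: 'f list) ! ?p = venc N D K (rv v' {D..<N}) ! ?p" using veq by simp
      then have "(if rv v' {D..<N} i = Some (v i) then 1 else 0 :: 'f) = 1"
        unfolding venc_nth[OF p] pd pm using True False by (simp add: rv_def)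
      then have "rv v' {D..<N} i = Some (v i)" by (metis zero_neq_one)
      then show ?thesis using True False by (simp add: rv_def)
    next
      case False
      then show ?thesis using v v' unfolding attrs_def by simp
    qed
  qed
qed


locale hds =
  fixes N D K :: nat and P :: "(nat \<Rightarrow> nat) pmf"
  assumes D1: "1 \<le> D" and DN: "D \<le> N" and K2: "2 \<le> K" and PA: "set_pmf P \<subseteq> attrs N K"
begin

lemma K0: "0 < K" using K2 by simp

lemma finP: "finite (set_pmf P)" using PA finite_attrs by (rule finite_subset)

lemma finM: "finite (set_pmf (outcome N K D (K * D) P (qdf N D K) :: (_ \<times> _ \<times> _ \<times> (nat \<Rightarrow> 'f::{finite,field})) pmf))"
  by (rule finite_outcome[OF finP])

lemma sch_fin: "\<forall>v\<in>set_pmf P. finite (set_pmf (qdf N D K v :: (nat \<Rightarrow> 'f::{finite,field} list) pmf))"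
  unfolding qdf_def by (simp add: finite_crs)

lemma sch_len:
  "\<forall>w\<in>set_pmf (outcome N K D (K * D) P (qdf N D K) :: (_ \<times> _ \<times> _ \<times> (nat \<Rightarrow> 'f::{finite,field})) pmf).
     \<forall>n\<le>D. length (answer N D K (ansf D K) n w) = cf D K n"
proof (intro ballI allI impI)
  fix w n assume w: "w \<in> set_pmf (outcome N K D (K * D) P (qdf N D K) :: (_ \<times> _ \<times> _ \<times> (nat \<Rightarrow> 'f)) pmf)" and n: "n \<le> D"
  obtain v \<alpha> W S where w': "w = (v, mkQ N D K v \<alpha>, W, S)" and v: "v \<in> set_pmf P"
    using set_outcome[OF w] by metis
  have va: "v \<in> attrs N K" using v PA by blast
  show "length (answer N D K (ansf D K) n w) = cf D K n"
  proof (cases "n < D")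
    case True then show ?thesis unfolding w' ans_ded[OF va DN K0 True] cf_def by simp
  next
    case False then have "n = D" using n by simp
    then show ?thesis unfolding w' using ans_central[OF va DN K0, of \<alpha> W S] by (simp add: cf_def)
  qed
qed

lemma sch_MI:
  "MI (outcome N K D (K * D) P (qdf N D K) :: (_ \<times> _ \<times> _ \<times> (nat \<Rightarrow> 'f::{finite,field})) pmf)
      (\<lambda>w. map ((\<lambda>(v, Q, W, S). Q) w) [0..<Suc D]) (\<lambda>(v, Q, W, S). W) = 0"
  unfolding MI_def
proof (subst condmi_sym, rule condmi_indep[where R = "\<lambda>(v, Q, W, S). W" and B = "\<lambda>(v, Q, W, S). (v, Q)"
      and F = "\<lambda>r z. r" and g = "\<lambda>_. ()" and f = "\<lambda>(v, Q). map Q [0..<Suc D]"])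
  show "finite (set_pmf (outcome N K D (K * D) P (qdf N D K) :: (_ \<times> _ \<times> _ \<times> (nat \<Rightarrow> 'f)) pmf))"
    by (rule finM)
  show "map_pmf (\<lambda>w. ((\<lambda>(v, Q, W, S). W) w, (\<lambda>(v, Q, W, S). (v, Q)) w)) (outcome N K D (K * D) P (qdf N D K) :: (_ \<times> _ \<times> _ \<times> (nat \<Rightarrow> 'f)) pmf)
     = pair_pmf (pmf_of_set (dbs N K D)) (bind_pmf P (\<lambda>v. map_pmf (\<lambda>b. (v, b)) (map_pmf (mkQ N D K v) (pmf_of_set (crs (D * TT K D))))))"
    by (rule outcome_pair[where \<rho> = "\<lambda>v u. fst (snd u)" and \<beta> = "\<lambda>v u. mkQ N D K v (fst u)"])
       (simp_all add: pv_MI)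
qed auto

lemma sch_S:
  "Ent (outcome N K D (K * D) P (qdf N D K) :: (_ \<times> _ \<times> _ \<times> (nat \<Rightarrow> 'f::{finite,field})) pmf) (\<lambda>(v, Q, W, S). S)
     \<ge> real (K * D) * log 2 (real CARD('f))"
proof -
  have "map_pmf (\<lambda>(v, Q, W, S). S) (outcome N K D (K * D) P (qdf N D K) :: (_ \<times> _ \<times> _ \<times> (nat \<Rightarrow> 'f)) pmf)
      = bind_pmf P (\<lambda>v. map_pmf (\<lambda>u. snd (snd u)) (pmf_of_set (UU N D K D (K * D) :: (_ \<times> _ \<times> (nat \<Rightarrow> 'f)) set)))"
    unfolding outcome_eq map_bind_pmf pmf.map_comp o_def
    by (rule bind_pmf_cong[OF refl], rule map_pmf_cong[OF refl]) auto
  also have "map_pmf (\<lambda>u. snd (snd u)) (pmf_of_set (UU N D K D (K * D) :: (_ \<times> _ \<times> (nat \<Rightarrow> 'f)) set)) = pmf_of_set (crs (K * D))"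
  proof -
    have "map_pmf (\<lambda>u. snd (snd u)) (pmf_of_set (UU N D K D (K * D) :: (_ \<times> _ \<times> (nat \<Rightarrow> 'f)) set))
        = map_pmf snd (map_pmf snd (pmf_of_set (UU N D K D (K * D) :: (_ \<times> _ \<times> (nat \<Rightarrow> 'f)) set)))"
      by (simp add: pmf.map_comp o_def)
    then show ?thesis by (simp add: pmf_UU map_snd_pair_pmf)
  qed
  finally have e: "map_pmf (\<lambda>(v, Q, W, S). S) (outcome N K D (K * D) P (qdf N D K) :: (_ \<times> _ \<times> _ \<times> (nat \<Rightarrow> 'f)) pmf)
      = pmf_of_set (crs (K * D))" by simp
  have "Ent (outcome N K D (K * D) P (qdf N D K) :: (_ \<times> _ \<times> _ \<times> (nat \<Rightarrow> 'f)) pmf) (\<lambda>(v, Q, W, S). S)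
      = log 2 (real (card (crs (K * D) :: (nat \<Rightarrow> 'f) set)))"
    unfolding Ent_def e by (rule ent_pmf_of_set) (simp_all add: finite_crs)
  also have "\<dots> = real (K * D) * log 2 (real CARD('f))"
    unfolding card_crs by (simp add: log_nat_power)
  finally show ?thesis by simp
qed

end


context hds begin

lemma sch_priv:
  assumes n: "n < D"
  shows "CondMI (outcome N K D (K * D) P (qdf N D K) :: (_ \<times> _ \<times> _ \<times> (nat \<Rightarrow> 'f::{finite,field})) pmf)
      (\<lambda>w. (\<lambda>(v, Q, W, S). Q) w n) (\<lambda>w. rv ((\<lambda>(v, Q, W, S). v) w) ({0..<D} - {n}))
      (\<lambda>w. ((\<lambda>(v, Q, W, S). S) w, rv ((\<lambda>(v, Q, W, S). v) w) {D..<N}, (\<lambda>(v, Q, W, S). v) w n)) = 0"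
proof (rule condmi_indep[where R = "\<lambda>w. (\<lambda>(v, Q, W, S). Q) w n" and B = "\<lambda>(v, Q, W, S). (v, S)"
      and F = "\<lambda>r z. r" and g = "\<lambda>(v, S). (S, rv v {D..<N}, v n)" and f = "\<lambda>(v, S). rv v ({0..<D} - {n})"])
  show "finite (set_pmf (outcome N K D (K * D) P (qdf N D K) :: (_ \<times> _ \<times> _ \<times> (nat \<Rightarrow> 'f)) pmf))"
    by (rule finM)
  show "map_pmf (\<lambda>w. ((\<lambda>w. (\<lambda>(v, Q, W, S). Q) w n) w, (\<lambda>(v, Q, W, S). (v, S)) w)) (outcome N K D (K * D) P (qdf N D K) :: (_ \<times> _ \<times> _ \<times> (nat \<Rightarrow> 'f)) pmf)
     = pair_pmf (map_pmf (\<lambda>a. map (\<lambda>j. a (n * TT K D + j)) [0..<TT K D]) (pmf_of_set (crs (D * TT K D))))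
         (bind_pmf P (\<lambda>v. map_pmf (\<lambda>b. (v, b)) (pmf_of_set (crs (K * D)))))"
  proof (rule outcome_pair[where \<rho> = "\<lambda>v u. mkQ N D K v (fst u) n" and \<beta> = "\<lambda>v u. snd (snd u)"])
    fix v assume "v \<in> set_pmf P"
    then have va: "v \<in> attrs N K" using PA by blast
    show "map_pmf (\<lambda>u. (mkQ N D K v (fst u) n, snd (snd u))) (pmf_of_set (UU N D K D (K * D)))
       = pair_pmf (map_pmf (\<lambda>a. map (\<lambda>j. a (n * TT K D + j)) [0..<TT K D]) (pmf_of_set (crs (D * TT K D)))) (pmf_of_set (crs (K * D)))"
      by (rule pv_ded[OF va DN K0 n])
  qed simp
qed auto

lemma sch_central:
  "CondMI (outcome N K D (K * D) P (qdf N D K) :: (_ \<times> _ \<times> _ \<times> (nat \<Rightarrow> 'f::{finite,field})) pmf)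
      (\<lambda>w. (\<lambda>(v, Q, W, S). Q) w D) (\<lambda>w. rv ((\<lambda>(v, Q, W, S). v) w) {0..<D})
      (\<lambda>w. ((\<lambda>(v, Q, W, S). S) w, rv ((\<lambda>(v, Q, W, S). v) w) {D..<N})) = 0"
proof (rule condmi_indep[where R = "\<lambda>w. take (D * TT K D) ((\<lambda>(v, Q, W, S). Q) w D)" and B = "\<lambda>(v, Q, W, S). (v, S)"
      and F = "\<lambda>r z. r @ venc N D K (snd z)" and g = "\<lambda>(v, S). (S, rv v {D..<N})" and f = "\<lambda>(v, S). rv v {0..<D}"])
  show "finite (set_pmf (outcome N K D (K * D) P (qdf N D K) :: (_ \<times> _ \<times> _ \<times> (nat \<Rightarrow> 'f)) pmf))"
    by (rule finM)
  show "map_pmf (\<lambda>w. ((\<lambda>w. take (D * TT K D) ((\<lambda>(v, Q, W, S). Q) w D)) w, (\<lambda>(v, Q, W, S). (v, S)) w)) (outcome N K D (K * D) P (qdf N D K) :: (_ \<times> _ \<times> _ \<times> (nat \<Rightarrow> 'f)) pmf)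
     = pair_pmf (map_pmf (\<lambda>a. map a [0..<D * TT K D]) (pmf_of_set (crs (D * TT K D))))
         (bind_pmf P (\<lambda>v. map_pmf (\<lambda>b. (v, b)) (pmf_of_set (crs (K * D)))))"
  proof (rule outcome_pair[where \<rho> = "\<lambda>v u. map (fst u) [0..<D * TT K D]" and \<beta> = "\<lambda>v u. snd (snd u)"])
    fix v assume "v \<in> set_pmf P"
    show "map_pmf (\<lambda>u. (map (fst u) [0..<D * TT K D], snd (snd u))) (pmf_of_set (UU N D K D (K * D)))
       = pair_pmf (map_pmf (\<lambda>a. map a [0..<D * TT K D]) (pmf_of_set (crs (D * TT K D)))) (pmf_of_set (crs (K * D)))"
      by (rule pv_central)
  qed (simp add: mkQ_def mkQl_def)
next
  fix w assume "w \<in> set_pmf (outcome N K D (K * D) P (qdf N D K) :: (_ \<times> _ \<times> _ \<times> (nat \<Rightarrow> 'f)) pmf)"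
  then obtain v \<alpha> W S where w': "w = (v, mkQ N D K v \<alpha>, W, S)"
    using set_outcome by metis
  show "(\<lambda>(v, Q, W, S). Q) w D = (\<lambda>r z. r @ venc N D K (snd z)) (take (D * TT K D) ((\<lambda>(v, Q, W, S). Q) w D)) ((\<lambda>(v, S). (S, rv v {D..<N})) ((\<lambda>(v, Q, W, S). (v, S)) w))"
    unfolding w' by (simp add: mkQ_def mkQl_def)
qed auto

end


context hds begin

lemma sch_sec:
  "CondMI (outcome N K D (K * D) P (qdf N D K) :: (_ \<times> _ \<times> _ \<times> (nat \<Rightarrow> 'f::{finite,field})) pmf)
      (\<lambda>w. ((\<lambda>(v, Q, W, S). W) w) ((\<lambda>(v, Q, W, S). v) w := (\<lambda>_. 0)))
      (\<lambda>w. (map ((\<lambda>(v, Q, W, S). Q) w) [0..<Suc D], map (\<lambda>n. answer N D K (ansf D K) n w) [0..<Suc D]))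
      (\<lambda>(v, Q, W, S). v) = 0"
proof (subst condmi_sym, rule condmi_indep[where
      R = "\<lambda>w. (take (D * TT K D) ((\<lambda>(v, Q, W, S). Q) w D), answer N D K (ansf D K) D w, ((\<lambda>(v, Q, W, S). W) w) ((\<lambda>(v, Q, W, S). v) w))"
      and B = "\<lambda>(v, Q, W, S). (v, W(v := (\<lambda>_. 0)))"
      and F = "\<lambda>(al, ad, x) v. (map (mkQl N D K v al) [0..<Suc D], map (\<lambda>n. if n < D then [ad ! (n * K + v n) - x n] else ad) [0..<Suc D])"
      and g = fst and f = snd])
  show "finite (set_pmf (outcome N K D (K * D) P (qdf N D K) :: (_ \<times> _ \<times> _ \<times> (nat \<Rightarrow> 'f)) pmf))"
    by (rule finM)
  show "map_pmf (\<lambda>w. ((\<lambda>w. (take (D * TT K D) ((\<lambda>(v, Q, W, S). Q) w D), answer N D K (ansf D K) D w, ((\<lambda>(v, Q, W, S). W) w) ((\<lambda>(v, Q, W, S). v) w))) w,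
                     (\<lambda>(v, Q, W, S). (v, W(v := (\<lambda>_. 0)))) w))
          (outcome N K D (K * D) P (qdf N D K) :: (_ \<times> _ \<times> _ \<times> (nat \<Rightarrow> 'f)) pmf)
     = pair_pmf (map_pmf (\<lambda>(\<alpha>, S', x). (map \<alpha> [0..<D * TT K D], map S' [0..<K * D], x))
                 (pmf_of_set (crs (D * TT K D) \<times> (crs (K * D) \<times> crs D))))
         (bind_pmf P (\<lambda>v. map_pmf (\<lambda>b. (v, b)) (pmf_of_set (W0 N K D v))))"
  proof (rule outcome_pair[where \<rho> = "\<lambda>v u. (map (fst u) [0..<D * TT K D], answer N D K (ansf D K) D (v, mkQ N D K v (fst u), fst (snd u), snd (snd u)), fst (snd u) v)"
       and \<beta> = "\<lambda>v u. (fst (snd u)) (v := (\<lambda>_. 0))"])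
    fix v assume "v \<in> set_pmf P"
    then have va: "v \<in> attrs N K" using PA by blast
    show "map_pmf (\<lambda>u. ((map (fst u) [0..<D * TT K D], answer N D K (ansf D K) D (v, mkQ N D K v (fst u), fst (snd u), snd (snd u)), fst (snd u) v),
                        (fst (snd u)) (v := (\<lambda>_. 0)))) (pmf_of_set (UU N D K D (K * D)))
       = pair_pmf (map_pmf (\<lambda>(\<alpha>, S', x). (map \<alpha> [0..<D * TT K D], map S' [0..<K * D], x))
                 (pmf_of_set (crs (D * TT K D) \<times> (crs (K * D) \<times> crs D)))) (pmf_of_set (W0 N K D v))"
      by (rule pv_sec[OF va DN K0])
  qed (simp add: mkQ_def mkQl_def)
next
  fix w assume "w \<in> set_pmf (outcome N K D (K * D) P (qdf N D K) :: (_ \<times> _ \<times> _ \<times> (nat \<Rightarrow> 'f)) pmf)"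
  then obtain v \<alpha> W S where w': "w = (v, mkQ N D K v \<alpha>, W, S)" and v: "v \<in> set_pmf P"
    using set_outcome by metis
  have va: "v \<in> attrs N K" using v PA by blast
  have q: "map (mkQ N D K v \<alpha>) [0..<Suc D] = map (mkQl N D K v (map \<alpha> [0..<D * TT K D])) [0..<Suc D]"
    by (simp add: mkQ_def)
  have a: "map (\<lambda>n. answer N D K (ansf D K) n w) [0..<Suc D]
     = map (\<lambda>n. if n < D then [answer N D K (ansf D K) D w ! (n * K + v n) - W v n] else answer N D K (ansf D K) D w) [0..<Suc D]"
  proof (rule map_cong[OF refl])
    fix n assume "n \<in> set [0..<Suc D]"
    then have "n \<le> D" by (simp del: upt_Suc)
    show "answer N D K (ansf D K) n w = (if n < D then [answer N D K (ansf D K) D w ! (n * K + v n) - W v n] else answer N D K (ansf D K) D w)"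
    proof (cases "n < D")
      case True then show ?thesis unfolding w' using dec_W[OF va DN K0 True] by simp
    next
      case False then show ?thesis using \<open>n \<le> D\<close> by simp
    qed
  qed
  have tk: "take (D * TT K D) (mkQ N D K v \<alpha> D) = map \<alpha> [0..<D * TT K D]"
    by (simp add: mkQ_def mkQl_def)
  show "(\<lambda>w. (map ((\<lambda>(v, Q, W, S). Q) w) [0..<Suc D], map (\<lambda>n. answer N D K (ansf D K) n w) [0..<Suc D])) w =
    (\<lambda>(al, ad, x) v. (map (mkQl N D K v al) [0..<Suc D], map (\<lambda>n. if n < D then [ad ! (n * K + v n) - x n] else ad) [0..<Suc D]))
     ((\<lambda>w. (take (D * TT K D) ((\<lambda>(v, Q, W, S). Q) w D), answer N D K (ansf D K) D w, ((\<lambda>(v, Q, W, S). W) w) ((\<lambda>(v, Q, W, S). v) w))) w)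
     (fst ((\<lambda>(v, Q, W, S). (v, W(v := (\<lambda>_. 0)))) w))"
    unfolding w' prod.case fst_conv tk using q a[unfolded w'] by (simp only:)
qed auto

lemma sch_cor:
  "CondEnt (outcome N K D (K * D) P (qdf N D K) :: (_ \<times> _ \<times> _ \<times> (nat \<Rightarrow> 'f::{finite,field})) pmf)
      (\<lambda>w. ((\<lambda>(v, Q, W, S). W) w) ((\<lambda>(v, Q, W, S). v) w))
      (\<lambda>w. (map ((\<lambda>(v, Q, W, S). Q) w) [0..<Suc D], map (\<lambda>n. answer N D K (ansf D K) n w) [0..<Suc D])) = 0"
proof (rule condent_zero[OF finM])
  fix w w' assume w: "w \<in> set_pmf (outcome N K D (K * D) P (qdf N D K) :: (_ \<times> _ \<times> _ \<times> (nat \<Rightarrow> 'f)) pmf)"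
    and w2: "w' \<in> set_pmf (outcome N K D (K * D) P (qdf N D K) :: (_ \<times> _ \<times> _ \<times> (nat \<Rightarrow> 'f)) pmf)"
    and eq: "(map ((\<lambda>(v, Q, W, S). Q) w) [0..<Suc D], map (\<lambda>n. answer N D K (ansf D K) n w) [0..<Suc D]) =
             (map ((\<lambda>(v, Q, W, S). Q) w') [0..<Suc D], map (\<lambda>n. answer N D K (ansf D K) n w') [0..<Suc D])"
  obtain v \<alpha> W S where w1: "w = (v, mkQ N D K v \<alpha>, W, S)" and v: "v \<in> set_pmf P" and W: "W \<in> dbs N K D"
    using set_outcome[OF w] by metis
  obtain v' \<alpha>' W' S' where w1': "w' = (v', mkQ N D K v' \<alpha>', W', S')" and v': "v' \<in> set_pmf P" and W': "W' \<in> dbs N K D"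
    using set_outcome[OF w2] by metis
  have va: "v \<in> attrs N K" using v PA by blast
  have va': "v' \<in> attrs N K" using v' PA by blast
  have all: "(\<forall>x\<in>{0..<Suc D}. mkQ N D K v \<alpha> x = mkQ N D K v' \<alpha>' x) \<and>
     (\<forall>x\<in>{0..<Suc D}. answer N D K (ansf D K) x w = answer N D K (ansf D K) x w')"
    using eq unfolding w1 w1' by (simp del: upt_Suc)
  have Qeq: "mkQ N D K v \<alpha> n = mkQ N D K v' \<alpha>' n" if "n \<le> D" for n
    using all that by simp
  have Aeq: "answer N D K (ansf D K) n w = answer N D K (ansf D K) n w'" if "n \<le> D" for n
    using all that by simp
  have vv: "v = v'"
    by (rule v_rec[OF va va' DN D1 K0 Qeq Qeq]) (use D1 in simp_all)
  have "W v = W' v'"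
  proof
    fix l show "W v l = W' v' l"
    proof (cases "l < D")
      case True
      have "answer N D K (ansf D K) l w = [answer N D K (ansf D K) D w ! (l * K + v l) - W v l]"
        unfolding w1 by (rule dec_W[OF va DN K0 True])
      moreover have "answer N D K (ansf D K) l w' = [answer N D K (ansf D K) D w' ! (l * K + v' l) - W' v' l]"
        unfolding w1' by (rule dec_W[OF va' DN K0 True])
      ultimately show ?thesis using Aeq[of l] Aeq[of D] True vv by simp
    next
      case False
      then show ?thesis using W W' unfolding dbs_def by simp
    qed
  qed
  then show "(\<lambda>w. ((\<lambda>(v, Q, W, S). W) w) ((\<lambda>(v, Q, W, S). v) w)) w = (\<lambda>w. ((\<lambda>(v, Q, W, S). W) w) ((\<lambda>(v, Q, W, S). v) w)) w'"
    unfolding w1 w1' by simp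
qed

end


lemma sum_cf: "(\<Sum>n\<le>D. cf D K n) = D + K * D"
proof -
  have "(\<Sum>n\<le>D. cf D K n) = (\<Sum>n<D. cf D K n) + cf D K D"
    by (simp add: lessThan_Suc_atMost[symmetric])
  also have "(\<Sum>n<D. cf D K n) = (\<Sum>n<D. 1)" by (rule sum.cong) (simp_all add: cf_def)
  finally show ?thesis by (simp add: cf_def)
qed

theorem theorem1:
  fixes N D K :: nat and P :: "(nat \<Rightarrow> nat) pmf"
  assumes "1 \<le> D" and "D \<le> N" and "2 \<le> K" and "set_pmf P \<subseteq> attrs N K"
  shows "\<exists>(L::nat) (m::nat) (qd :: (nat \<Rightarrow> nat) \<Rightarrow> (nat \<Rightarrow> 'f::{finite,field} list) pmf) ans c.
           1 \<le> L
         \<and> hetdapac_scheme N D K P L m qd ans c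
         \<and> real L / real (\<Sum>n\<le>D. c n) = 1 / real (K + 1)
         \<and> (\<forall>n<D. c n = c 0)
         \<and> real (c 0) / real (c D) = 1 / real (K * D)
         \<and> Ent (outcome N K L m P qd) (\<lambda>(v, Q, W, S). S) \<ge> real (K * L) * log 2 (real CARD('f))"
proof -
  interpret hds N D K P using assms by unfold_locales
  have D0: "0 < D" using assms(1) by simp
  have sch: "hetdapac_scheme N D K P D (K * D) (qdf N D K :: (nat \<Rightarrow> nat) \<Rightarrow> (nat \<Rightarrow> 'f list) pmf) (ansf D K) (cf D K)"
    unfolding hetdapac_scheme_def Let_def
    using sch_fin sch_len sch_MI sch_cor sch_priv sch_central sch_sec by blast
  have r1: "real D / real (\<Sum>n\<le>D. cf D K n) = 1 / real (K + 1)"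
  proof -
    have nz: "real D + real D * real K > 0" using D0 by (simp add: add_pos_nonneg)
    then show ?thesis unfolding sum_cf by (simp add: field_simps)
  qed
  have r2: "\<forall>n<D. cf D K n = cf D K 0" using D0 by (simp add: cf_def)
  have r3: "real (cf D K 0) / real (cf D K D) = 1 / real (K * D)" using D0 by (simp add: cf_def)
  have r4: "Ent (outcome N K D (K * D) P (qdf N D K :: (nat \<Rightarrow> nat) \<Rightarrow> (nat \<Rightarrow> 'f list) pmf)) (\<lambda>(v, Q, W, S). S)
      \<ge> real (K * D) * log 2 (real CARD('f))" by (rule sch_S)
  show ?thesis
    by (rule exI[of _ D], rule exI[of _ "K * D"], rule exI[of _ "qdf N D K"], rule exI[of _ "ansf D K"], rule exI[of _ "cf D K"])
       (use assms(1) sch r1 r2 r3 r4 in blast)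
qed


end
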